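(* Let $\mathbb A=(A_n)_{n\in\mathbb N}$ be a sequence of invertible linear operators on $\mathbb R^d$ and $\mathcal S=\{\|\cdot\|_n;\ n\in\mathbb N\}$ a sequence of norms on $\mathbb R^d$ such that there exist $K,a>0$ with $\|\mathcal A(m,n)x\|_m\le K(m/n)^a\|x\|_n$ and $\|\mathcal A(n,m)x\|_n\le K(m/n)^a\|x\|_m$ for all $m\ge n$ and $x$. Let $\mathbb B=(B_n)_{n\in\mathbb Z^+}$ with $B_n=\mathcal A(2^{n+1},2^n)$ and $\tilde{\mathcal S}=\{\|\cdot\|_{2^n};\ n\in\mathbb Z^+\}$. Then there exist $1\le r\le d$ and $a_1\le b_1<\dots<a_r\le b_r$ such that $$\Sigma_{ED,\mathbb B,\tilde{\mathcal S}}=\bigcup_{i=1}^r[a_i,b_i]\quad\text{and}\quad\Sigma_{PD,\mathbb A,\mathcal S}=\bigcup_{i=1}^r\Big[\frac{\log a_i}{\log2},\frac{\log b_i}{\log2}\Big].$$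
   Context: $\mathbb N=\{1,2,\dots\}$, $\mathbb Z^+=\{0,1,\dots\}$. For invertible $(C_n)$, $\mathcal C(m,n)=C_{m-1}\cdots C_n$ ($m>n$), $\mathrm{Id}$ ($m=n$), $C_m^{-1}\cdots C_{n-1}^{-1}$ ($m<n$). Strong polynomial dichotomy of $(C_n)_{n\in\mathbb N}$ w.r.t. $\{\|\cdot\|_n\}$: there exist $K>0$, $a\ge\lambda>0$, projections $P_n$ with $C_nP_n=P_{n+1}C_n$ and, for $m\ge n$, $x$, $Q_m=\mathrm{Id}-P_m$: $\|\mathcal C(m,n)P_nx\|_m\le K(m/n)^{-\lambda}\|x\|_n$, $\|\mathcal C(n,m)Q_mx\|_n\le K(m/n)^{-\lambda}\|x\|_m$, $\|\mathcal C(m,n)x\|_m\le K(m/n)^a\|x\|_n$, $\|\mathcal C(n,m)x\|_n\le K(m/n)^a\|x\|_m$. Strong exponential dichotomy of $(C_n)_{n\in\mathbb Z^+}$ w.r.t. $\{|\cdot|_n\}$: same with $(m/n)^{-\lambda}$ replaced by $e^{-\lambda(m-n)}$ and $(m/n)^a$ by $e^{a(m-n)}$. $\Sigma_{PD,\mathbb A,\mathcal S}$: set of $\tau\in\mathbb R$ such that $(((n+1)/n)^{-\tau}A_n)_{n\in\mathbb N}$ does not admit a strong polynomial dichotomy w.r.t. $\mathcal S$. $\Sigma_{ED,\mathbb B,\tilde{\mathcal S}}$: set of $\tau>0$ such that $(\tau^{-1}B_n)_{n\in\mathbb Z^+}$ does not admit a strong exponential dichotomy w.r.t. $\tilde{\mathcal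 S}$. *)

theory Defs
  imports "HOL-Analysis.Analysis"
begin

type_synonym 'n mat = "real ^ 'n ^ 'n"

definition is_norm :: "(real ^ 'n \<Rightarrow> real) \<Rightarrow> bool" where
  "is_norm N \<longleftrightarrow> (\<forall>x. N x \<ge> 0) \<and> (\<forall>x. N x = 0 \<longleftrightarrow> x = 0)
     \<and> (\<forall>c x. N (c *\<^sub>R x) = \<bar>c\<bar> * N x) \<and> (\<forall>x y. N (x + y) \<le> N x + N y)"

fun fwd :: "(nat \<Rightarrow> 'n::finite mat) \<Rightarrow> nat \<Rightarrow> nat \<Rightarrow> 'n mat" where
  "fwd C n 0 = mat 1"
| "fwd C n (Suc k) = C (n + k) ** fwd C n k"

definition cocycle :: "(nat \<Rightarrow> 'n::finite mat) \<Rightarrow> nat \<Rightarrow> nat \<Rightarrow> 'n mat" where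
  "cocycle C m n = (if n \<le> m then fwd C n (m - n) else matrix_inv (fwd C m (n - m)))"

definition strong_poly_dich :: "(nat \<Rightarrow> 'n::finite mat) \<Rightarrow> (nat \<Rightarrow> real ^ 'n \<Rightarrow> real) \<Rightarrow> bool" where
  "strong_poly_dich C N \<longleftrightarrow>
    (\<exists>K a lam P. K > 0 \<and> lam > 0 \<and> a \<ge> lam \<and>
      (\<forall>n\<ge>1. P n ** P n = P n \<and> C n ** P n = P (n+1) ** C n) \<and>
      (\<forall>m n x. 1 \<le> n \<longrightarrow> n \<le> m \<longrightarrow>
         N m ((cocycle C m n ** P n) *v x) \<le> K * (real m / real n) powr (-lam) * N n x \<and>
         N n ((cocycle C n m ** (mat 1 - P m)) *v x) \<le> K * (real m / real n) powr (-lam) * N m x \<and>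
         N m (cocycle C m n *v x) \<le> K * (real m / real n) powr a * N n x \<and>
         N n (cocycle C n m *v x) \<le> K * (real m / real n) powr a * N m x))"

definition strong_exp_dich :: "(nat \<Rightarrow> 'n::finite mat) \<Rightarrow> (nat \<Rightarrow> real ^ 'n \<Rightarrow> real) \<Rightarrow> bool" where
  "strong_exp_dich C N \<longleftrightarrow>
    (\<exists>K a lam P. K > 0 \<and> lam > 0 \<and> a \<ge> lam \<and>
      (\<forall>n. P n ** P n = P n \<and> C n ** P n = P (n+1) ** C n) \<and>
      (\<forall>m n x. n \<le> m \<longrightarrow>
         N m ((cocycle C m n ** P n) *v x) \<le> K * exp (-lam * (real m - real n)) * N n x \<and>
         N n ((cocycle C n m ** (mat 1 - P m)) *v x) \<le> K * exp (-lam * (real m - real n)) * N m x \<and>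
         N m (cocycle C m n *v x) \<le> K * exp (a * (real m - real n)) * N n x \<and>
         N n (cocycle C n m *v x) \<le> K * exp (a * (real m - real n)) * N m x))"

definition Sigma_PD :: "(nat \<Rightarrow> 'n::finite mat) \<Rightarrow> (nat \<Rightarrow> real ^ 'n \<Rightarrow> real) \<Rightarrow> real set" where
  "Sigma_PD A N = {\<tau>. \<not> strong_poly_dich (\<lambda>n. ((real n + 1) / real n) powr (-\<tau>) *\<^sub>R A n) N}"

definition Sigma_ED :: "(nat \<Rightarrow> 'n::finite mat) \<Rightarrow> (nat \<Rightarrow> real ^ 'n \<Rightarrow> real) \<Rightarrow> real set" where
  "Sigma_ED B N = {\<tau>. \<tau> > 0 \<and> \<not> strong_exp_dich (\<lambda>n. (1 / \<tau>) *\<^sub>R B n) N}"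

end

theory Submission
  imports Defs
begin

lemma minv:
  fixes A :: "real^'n^'n"
  assumes "invertible A"
  shows "A ** matrix_inv A = mat 1" "matrix_inv A ** A = mat 1"
  using someI_ex[OF assms[unfolded invertible_def]] unfolding matrix_inv_def by auto

lemma minv_unique:
  fixes A B :: "real^'n^'n"
  assumes "A ** B = mat 1" "B ** A = mat 1"
  shows "matrix_inv A = B"
proof -
  have iA: "invertible A" using assms invertible_def by blast
  have "matrix_inv A = matrix_inv A ** (A ** B)" using assms by simp
  also have "\<dots> = B" by (simp add: matrix_mul_assoc minv(2)[OF iA])
  finally show ?thesis .
qed

lemma minv_invertible:
  fixes A :: "real^'n^'n"
  assumes "invertible A" shows "invertible (matrix_inv A)"
  using minv[OF assms] invertible_def by blast

lemma invertible_mat1: "invertible (mat 1 :: real^'n^'n)"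
  unfolding invertible_def by (rule exI[of _ "mat 1"]) simp

lemma minv_scale:
  fixes A :: "real^'n^'n"
  assumes "invertible A" "c \<noteq> 0"
  shows "matrix_inv (c *\<^sub>R A) = (1/c) *\<^sub>R matrix_inv A"
  apply (rule minv_unique)
  using assms minv[OF assms(1)]
  by (simp_all add: matrix_scalar_ac scalar_matrix_assoc[symmetric])

lemma fwd_F:
  fixes C F :: "nat \<Rightarrow> real^'n^'n"
  assumes iF: "\<forall>k\<ge>b. invertible (F k)"
    and CF: "\<forall>k\<ge>b. C k = F (Suc k) ** matrix_inv (F k)"
    and "b \<le> n"
  shows "fwd C n j = F (n+j) ** matrix_inv (F n)"
proof (induction j)
  case 0
  have "invertible (F n)" using iF assms(3) by simp
  then show ?case by (simp add: minv)
next
  case (Suc j)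
  have "fwd C n (Suc j) = (F (Suc (n+j)) ** matrix_inv (F (n+j))) ** (F (n+j) ** matrix_inv (F n))"
    using Suc CF assms(3) by simp
  also have "\<dots> = F (Suc (n+j)) ** (matrix_inv (F (n+j)) ** F (n+j)) ** matrix_inv (F n)"
    by (simp add: matrix_mul_assoc)
  also have "\<dots> = F (n + Suc j) ** matrix_inv (F n)"
  proof -
    have "invertible (F (n+j))" using iF assms(3) by simp
    then show ?thesis by (simp add: minv)
  qed
  finally show ?case .
qed

lemma cocycle_F:
  fixes C F :: "nat \<Rightarrow> real^'n^'n"
  assumes iF: "\<forall>k\<ge>b. invertible (F k)"
    and CF: "\<forall>k\<ge>b. C k = F (Suc k) ** matrix_inv (F k)"
    and "b \<le> m" "b \<le> n"
  shows "cocycle C m n = F m ** matrix_inv (F n)"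
proof (cases "n \<le> m")
  case True
  then show ?thesis unfolding cocycle_def using fwd_F[OF iF CF assms(4), of "m-n"] by simp
next
  case False
  have "cocycle C m n = matrix_inv (F n ** matrix_inv (F m))"
    unfolding cocycle_def using False fwd_F[OF iF CF assms(3), of "n-m"] by simp
  also have "\<dots> = F m ** matrix_inv (F n)"
  proof (rule minv_unique)
    have i1: "invertible (F m)" "invertible (F n)" using iF assms by auto
    show "F n ** matrix_inv (F m) ** (F m ** matrix_inv (F n)) = mat 1"
      by (metis i1 matrix_mul_assoc matrix_mul_rid minv)
    show "F m ** matrix_inv (F n) ** (F n ** matrix_inv (F m)) = mat 1"
      by (metis i1 matrix_mul_assoc matrix_mul_rid minv)
  qed
  finally show ?thesis .
qed

definition Phi :: "(nat \<Rightarrow> 'n::finite mat) \<Rightarrow> nat \<Rightarrow> nat \<Rightarrow> 'n mat" where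
  "Phi C b k = fwd C b (k - b)"

lemma Phi_invertible:
  fixes C :: "nat \<Rightarrow> real^'n^'n"
  assumes "\<forall>k\<ge>b. invertible (C k)"
  shows "invertible (fwd C b j)"
  by (induction j) (use assms in \<open>auto intro!: invertible_mult simp: invertible_mat1\<close>)

lemma Phi_step:
  fixes C :: "nat \<Rightarrow> real^'n^'n"
  assumes "\<forall>k\<ge>b. invertible (C k)" "b \<le> k"
  shows "C k = Phi C b (Suc k) ** matrix_inv (Phi C b k)"
proof -
  have "Phi C b (Suc k) = C k ** Phi C b k"
    using assms(2) by (simp add: Phi_def Suc_diff_le)
  then show ?thesis
    using minv(1)[OF Phi_invertible[OF assms(1)]]
    by (simp add: Phi_def matrix_mul_assoc[symmetric])
qed

lemma cocycle_rep:
  fixes C :: "nat \<Rightarrow> real^'n^'n"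
  assumes "\<forall>k\<ge>b. invertible (C k)" "b \<le> m" "b \<le> n"
  shows "cocycle C m n = Phi C b m ** matrix_inv (Phi C b n)"
  apply (rule cocycle_F[OF _ _ assms(2,3)])
  using Phi_invertible[OF assms(1)] Phi_step[OF assms(1)] by (auto simp: Phi_def)

lemma coc_comp:
  fixes C :: "nat \<Rightarrow> real^'n^'n"
  assumes "\<forall>k\<ge>b. invertible (C k)" "b \<le> m" "b \<le> k" "b \<le> n"
  shows "cocycle C m k ** cocycle C k n = cocycle C m n"
proof -
  have i: "invertible (Phi C b k)" using Phi_invertible[OF assms(1)] by (simp add: Phi_def)
  show ?thesis
    using cocycle_rep[OF assms(1)] assms minv(2)[OF i]
    by (metis matrix_mul_assoc matrix_mul_rid)
qed

lemma coc_id: "cocycle C n n = mat 1"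
  by (simp add: cocycle_def)

lemma coc_inv:
  fixes C :: "nat \<Rightarrow> real^'n^'n"
  assumes "\<forall>k\<ge>b. invertible (C k)" "b \<le> m" "b \<le> n"
  shows "cocycle C m n ** cocycle C n m = mat 1"
  using coc_comp[OF assms(1,2,3,2)] coc_id by simp

lemma coc_step: "cocycle C (Suc k) k = C k"
  by (simp add: cocycle_def)

lemma coc_Suc:
  fixes C :: "nat \<Rightarrow> real^'n^'n"
  assumes "n \<le> m"
  shows "cocycle C (Suc m) n = C m ** cocycle C m n"
  using assms by (simp add: cocycle_def Suc_diff_le)

lemma coc_invar:
  fixes C P :: "nat \<Rightarrow> real^'n^'n"
  assumes iC: "\<forall>k\<ge>b. invertible (C k)"
    and inv: "\<forall>k\<ge>b. C k ** P k = P (Suc k) ** C k"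
    and "b \<le> m" "b \<le> n"
  shows "cocycle C m n ** P n = P m ** cocycle C m n"
proof -
  have fw: "cocycle C m n ** P n = P m ** cocycle C m n" if "b \<le> n" "n \<le> m" for m n
    using that(2)
  proof (induction m rule: dec_induct)
    case base
    then show ?case by (simp add: coc_id)
  next
    case (step m)
    have "cocycle C (Suc m) n ** P n = C m ** (cocycle C m n ** P n)"
      using coc_Suc[OF step(1), of C] by (simp add: matrix_mul_assoc)
    also have "\<dots> = (C m ** P m) ** cocycle C m n" using step(3) by (simp add: matrix_mul_assoc)
    also have "\<dots> = P (Suc m) ** cocycle C (Suc m) n"
      using inv step(1) that(1) coc_Suc[OF step(1), of C] by (simp add: matrix_mul_assoc)
    finally show ?case .
  qed
  show ?thesis
  proof (cases "n \<le> m")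
    case True
    then show ?thesis using fw assms by auto
  next
    case False
    let ?X = "cocycle C n m" and ?Y = "cocycle C m n"
    have XP: "?X ** P m = P n ** ?X" using fw False assms by auto
    have XY: "?X ** ?Y = mat 1" "?Y ** ?X = mat 1" using coc_inv[OF iC] assms by auto
    have "?Y ** P n = ?Y ** P n ** (?X ** ?Y)" using XY by simp
    also have "\<dots> = ?Y ** (P n ** ?X) ** ?Y" by (simp add: matrix_mul_assoc)
    also have "\<dots> = ?Y ** (?X ** P m) ** ?Y" using XP by simp
    also have "\<dots> = (?Y ** ?X) ** P m ** ?Y" by (simp add: matrix_mul_assoc)
    also have "\<dots> = P m ** ?Y" using XY by simp
    finally show ?thesis .
  qed
qed

lemma coc_scale:
  fixes C D :: "nat \<Rightarrow> real^'n^'n"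
  assumes iC: "\<forall>k\<ge>b. invertible (C k)"
    and q: "\<forall>k\<ge>b. q k \<noteq> (0::real)"
    and D: "\<forall>k\<ge>b. D k = (q (Suc k) / q k) *\<^sub>R C k"
    and "b \<le> m" "b \<le> n"
  shows "cocycle D m n = (q m / q n) *\<^sub>R cocycle C m n"
proof -
  let ?F = "\<lambda>k. q k *\<^sub>R Phi C b k"
  have iP: "invertible (Phi C b k)" for k using Phi_invertible[OF iC] by (simp add: Phi_def)
  have iF: "\<forall>k\<ge>b. invertible (?F k)" using q iP scalar_invertible by blast
  have mF: "matrix_inv (?F k) = (1 / q k) *\<^sub>R matrix_inv (Phi C b k)" if "b \<le> k" for k
    using minv_scale[OF iP] q that by auto
  have DF: "\<forall>k\<ge>b. D k = ?F (Suc k) ** matrix_inv (?F k)"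
  proof (intro allI impI)
    fix k assume k: "b \<le> k"
    have "?F (Suc k) ** matrix_inv (?F k) = (q (Suc k) / q k) *\<^sub>R (Phi C b (Suc k) ** matrix_inv (Phi C b k))"
      using mF[OF k] by (simp add: matrix_scalar_ac scalar_matrix_assoc[symmetric])
    then show "D k = ?F (Suc k) ** matrix_inv (?F k)"
      using D Phi_step[OF iC k] k by simp
  qed
  have "cocycle D m n = ?F m ** matrix_inv (?F n)" by (rule cocycle_F[OF iF DF assms(4,5)])
  also have "\<dots> = (q m / q n) *\<^sub>R (Phi C b m ** matrix_inv (Phi C b n))"
    using mF[OF assms(5)] by (simp add: matrix_scalar_ac scalar_matrix_assoc[symmetric])
  also have "\<dots> = (q m / q n) *\<^sub>R cocycle C m n" using cocycle_rep[OF iC assms(4,5)] by simp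
  finally show ?thesis .
qed

lemma coc_pow2:
  fixes C :: "nat \<Rightarrow> real^'n^'n"
  assumes iC: "\<forall>k\<ge>1. invertible (C k)"
  shows "cocycle (\<lambda>k. cocycle C (2^(k+1)) (2^k)) m n = cocycle C (2^m) (2^n)"
proof -
  let ?F = "\<lambda>k. Phi C 1 (2^k)"
  have iF: "\<forall>k\<ge>0. invertible (?F k)" using Phi_invertible[OF iC] by (simp add: Phi_def)
  have CF: "\<forall>k\<ge>0. cocycle C (2^(k+1)) (2^k) = ?F (Suc k) ** matrix_inv (?F k)"
    using cocycle_rep[OF iC] by simp
  show ?thesis using cocycle_F[OF iF CF, of m n] cocycle_rep[OF iC, of "2^m" "2^n"] by simp
qed

lemma coc_invertible:
  fixes C :: "nat \<Rightarrow> real^'n^'n"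
  assumes "\<forall>k\<ge>b. invertible (C k)" "b \<le> m" "b \<le> n"
  shows "invertible (cocycle C m n)"
  using coc_inv[OF assms] coc_inv[OF assms(1,3,2)] invertible_def by blast

lemma mat_sub_rdistrib: "((A::real^'n^'m) - B) ** C = A ** C - B ** C"
  by (vector matrix_matrix_mult_def sum_subtractf left_diff_distrib)

lemma mat_sub_ldistrib: "(C::real^'n^'m) ** (A - B) = C ** A - C ** B"
  by (vector matrix_matrix_mult_def sum_subtractf right_diff_distrib)

lemma dimU: "dim (UNIV :: (real^'n) set) = CARD('n)"
  by simp

locale edsys =
  fixes B :: "nat \<Rightarrow> real^'n^'n" and M :: "nat \<Rightarrow> real^'n \<Rightarrow> real" and K0 g :: real
  assumes invB: "\<forall>k. invertible (B k)"
    and normM: "\<forall>n. is_norm (M n)"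
    and K0: "K0 > 0" and g: "g \<ge> 1"
    and grow: "\<And>m n x. n \<le> m \<Longrightarrow> M m (cocycle B m n *v x) \<le> K0 * g^(m-n) * M n x \<and>
                 M n (cocycle B n m *v x) \<le> K0 * g^(m-n) * M m x"
begin

lemma invB0: "\<forall>k\<ge>0. invertible (B k)" using invB by simp

lemma M_nonneg: "M n x \<ge> 0" using normM unfolding is_norm_def by blast
lemma M_zero: "M n x = 0 \<longleftrightarrow> x = 0" using normM unfolding is_norm_def by blast
lemma M_0[simp]: "M n 0 = 0" using M_zero by blast

definition good :: "real \<Rightarrow> (nat \<Rightarrow> real^'n^'n) \<Rightarrow> real \<Rightarrow> real \<Rightarrow> bool" where
  "good \<sigma> P K \<theta> \<longleftrightarrow> K > 0 \<and> 0 < \<theta> \<and> \<theta> < 1 \<and>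
     (\<forall>n. P n ** P n = P n \<and> B n ** P n = P (Suc n) ** B n) \<and>
     (\<forall>m n x. n \<le> m \<longrightarrow>
        M m ((cocycle B m n ** P n) *v x) \<le> K * (\<sigma>*\<theta>)^(m-n) * M n x \<and>
        M n ((cocycle B n m ** (mat 1 - P m)) *v x) \<le> K * (\<theta>/\<sigma>)^(m-n) * M m x)"

definition S :: "real \<Rightarrow> nat \<Rightarrow> (real^'n) set" where
  "S \<sigma> n = {x. \<exists>C. \<forall>m\<ge>n. M m (cocycle B m n *v x) \<le> C * \<sigma>^(m-n)}"

definition fixp :: "real^'n^'n \<Rightarrow> (real^'n) set" where
  "fixp P = {x. P *v x = x}"

lemma good_invar:
  assumes "good \<sigma> P K \<theta>"
  shows "cocycle B m n ** P n = P m ** cocycle B m n"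
  using assms unfolding good_def by (intro coc_invar[OF invB0]) auto

lemma good_Pbound:
  assumes "good \<sigma> P K \<theta>"
  shows "M n (P n *v x) \<le> K * M n x"
  using assms unfolding good_def by (metis coc_id diff_self_eq_0 matrix_mul_lid mult.right_neutral order_refl power_0)

lemma coc_vec_inv: "cocycle B n m *v (cocycle B m n *v x) = x"
  by (simp add: matrix_vector_mul_assoc coc_inv[OF invB0])

lemma L1:
  assumes gd: "good \<sigma> P K \<theta>" and sp: "\<sigma> > 0"
  shows "S \<sigma> n = fixp (P n)"
proof
  have K: "K > 0" and th: "0 < \<theta>" "\<theta> < 1" and idem: "P n ** P n = P n"
    and b1: "\<And>m n x. n \<le> m \<Longrightarrow> M m ((cocycle B m n ** P n) *v x) \<le> K * (\<sigma>*\<theta>)^(m-n) * M n x"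
    and b2: "\<And>m n x. n \<le> m \<Longrightarrow> M n ((cocycle B n m ** (mat 1 - P m)) *v x) \<le> K * (\<theta>/\<sigma>)^(m-n) * M m x"
    using gd unfolding good_def by auto
  show "fixp (P n) \<subseteq> S \<sigma> n"
  proof
    fix x assume "x \<in> fixp (P n)"
    then have x: "P n *v x = x" by (simp add: fixp_def)
    have "M m (cocycle B m n *v x) \<le> (K * M n x) * \<sigma>^(m-n)" if "m \<ge> n" for m
    proof -
      have "M m (cocycle B m n *v x) = M m ((cocycle B m n ** P n) *v x)"
        using x by (simp add: matrix_vector_mul_assoc[symmetric])
      also have "\<dots> \<le> K * (\<sigma>*\<theta>)^(m-n) * M n x" using b1 that by blast
      also have "\<dots> \<le> K * \<sigma>^(m-n) * M n x"
      proof -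
        have "(\<sigma>*\<theta>)^(m-n) \<le> \<sigma>^(m-n)"
          using sp th by (intro power_mono) (auto simp: mult_le_cancel_left1 less_imp_le)
        then show ?thesis using K M_nonneg by (intro mult_right_mono mult_left_mono) auto
      qed
      finally show ?thesis by (simp add: mult_ac)
    qed
    then show "x \<in> S \<sigma> n" unfolding S_def by blast
  qed
  show "S \<sigma> n \<subseteq> fixp (P n)"
  proof
    fix x assume "x \<in> S \<sigma> n"
    then obtain C where C: "\<And>m. m \<ge> n \<Longrightarrow> M m (cocycle B m n *v x) \<le> C * \<sigma>^(m-n)"
      unfolding S_def by blast
    define z where "z = x - P n *v x"
    have zb: "M n z \<le> K * C * \<theta>^k" for k
    proof -
      let ?m = "n + k"
      have inv: "(mat 1 - P ?m) ** cocycle B ?m n = cocycle B ?m n ** (mat 1 - P n)"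
        using good_invar[OF gd, of ?m n] by (simp add: mat_sub_rdistrib mat_sub_ldistrib)
      have "z = (cocycle B n ?m ** (mat 1 - P ?m)) *v (cocycle B ?m n *v x)"
      proof -
        have "(cocycle B n ?m ** (mat 1 - P ?m)) *v (cocycle B ?m n *v x)
             = cocycle B n ?m *v (((mat 1 - P ?m) ** cocycle B ?m n) *v x)"
          by (simp add: matrix_vector_mul_assoc matrix_mul_assoc)
        also have "\<dots> = cocycle B n ?m *v (cocycle B ?m n *v ((mat 1 - P n) *v x))"
          using inv by (simp add: matrix_vector_mul_assoc)
        also have "\<dots> = z" by (simp add: coc_vec_inv z_def matrix_vector_mult_diff_rdistrib)
        finally show ?thesis by simp
      qed
      then have "M n z \<le> K * (\<theta>/\<sigma>)^k * M ?m (cocycle B ?m n *v x)" using b2[of n ?m] by simp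
      also have "\<dots> \<le> K * (\<theta>/\<sigma>)^k * (C * \<sigma>^k)"
        using C[of ?m] K th sp by (intro mult_left_mono) auto
      also have "\<dots> = K * C * \<theta>^k" using sp by (simp add: power_divide)
      finally show ?thesis .
    qed
    have "(\<lambda>k. K * C * \<theta>^k) \<longlonglongrightarrow> K * C * 0"
      using th by (intro tendsto_mult tendsto_const LIMSEQ_power_zero) auto
    then have "M n z \<le> 0" using zb by (intro LIMSEQ_le_const) auto
    then have "z = 0" using M_nonneg M_zero by (meson antisym)
    then show "x \<in> fixp (P n)" by (simp add: z_def fixp_def)
  qed
qed

lemma L_image:
  assumes gd: "good \<sigma> P K \<theta>"
  shows "fixp (P n) = (\<lambda>x. cocycle B n 0 *v x) ` fixp (P 0)"
proof
  show "fixp (P n) \<subseteq> (\<lambda>x. cocycle B n 0 *v x) ` fixp (P 0)"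
  proof
    fix y assume "y \<in> fixp (P n)"
    then have y: "P n *v y = y" by (simp add: fixp_def)
    let ?x = "cocycle B 0 n *v y"
    have "P 0 *v ?x = cocycle B 0 n *v (P n *v y)"
      using good_invar[OF gd, of 0 n] by (simp add: matrix_vector_mul_assoc)
    then have "?x \<in> fixp (P 0)" using y by (simp add: fixp_def)
    moreover have "y = cocycle B n 0 *v ?x" by (simp add: coc_vec_inv)
    ultimately show "y \<in> (\<lambda>x. cocycle B n 0 *v x) ` fixp (P 0)" by blast
  qed
  show "(\<lambda>x. cocycle B n 0 *v x) ` fixp (P 0) \<subseteq> fixp (P n)"
  proof
    fix y assume "y \<in> (\<lambda>x. cocycle B n 0 *v x) ` fixp (P 0)"
    then obtain x where x: "P 0 *v x = x" and y: "y = cocycle B n 0 *v x" by (auto simp: fixp_def)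
    have "P n *v y = cocycle B n 0 *v (P 0 *v x)"
      using good_invar[OF gd, of n 0] y by (simp add: matrix_vector_mul_assoc)
    then show "y \<in> fixp (P n)" using x y by (simp add: fixp_def)
  qed
qed

lemma L2:
  assumes gd: "good \<sigma> P K \<theta>" and sp: "\<sigma> > 0"
    and l: "\<sigma>*\<theta> < \<sigma>'" and h: "\<sigma>' < \<sigma>/\<theta>"
  shows "good \<sigma>' P K (max (\<sigma>*\<theta>/\<sigma>') (\<theta>*\<sigma>'/\<sigma>))"
proof -
  have K: "K > 0" and th: "0 < \<theta>" "\<theta> < 1" and inv: "\<forall>n. P n ** P n = P n \<and> B n ** P n = P (Suc n) ** B n"
    and b1: "\<And>m n x. n \<le> m \<Longrightarrow> M m ((cocycle B m n ** P n) *v x) \<le> K * (\<sigma>*\<theta>)^(m-n) * M n x"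
    and b2: "\<And>m n x. n \<le> m \<Longrightarrow> M n ((cocycle B n m ** (mat 1 - P m)) *v x) \<le> K * (\<theta>/\<sigma>)^(m-n) * M m x"
    using gd unfolding good_def by auto
  define t where "t = max (\<sigma>*\<theta>/\<sigma>') (\<theta>*\<sigma>'/\<sigma>)"
  have sp': "\<sigma>' > 0" using l sp th by (smt (verit) mult_pos_pos)
  have t0: "0 < t" using sp sp' th by (simp add: t_def less_max_iff_disj)
  have t1: "t < 1" using l h sp sp' th by (simp add: t_def field_simps)
  have "\<sigma>*\<theta>/\<sigma>' \<le> t" unfolding t_def by simp
  then have c1: "\<sigma>*\<theta> \<le> \<sigma>'*t" using sp' by (simp add: divide_le_eq mult.commute)
  have "\<theta>*\<sigma>'/\<sigma> \<le> t" unfolding t_def by simp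
  then have c2: "\<theta>/\<sigma> \<le> t/\<sigma>'" using sp sp' by (simp add: field_simps)
  show ?thesis unfolding good_def t_def[symmetric]
  proof (intro conjI K t0 t1 inv allI impI)
    fix m n x assume mn: "n \<le> (m::nat)"
    have "K * (\<sigma>*\<theta>)^(m-n) * M n x \<le> K * (\<sigma>'*t)^(m-n) * M n x"
      using c1 K M_nonneg sp th by (intro mult_right_mono mult_left_mono power_mono) auto
    then show "M m ((cocycle B m n ** P n) *v x) \<le> K * (\<sigma>'*t)^(m-n) * M n x"
      using b1[OF mn, of x] by linarith
    have "K * (\<theta>/\<sigma>)^(m-n) * M m x \<le> K * (t/\<sigma>')^(m-n) * M m x"
      using c2 K M_nonneg sp th by (intro mult_right_mono mult_left_mono power_mono) auto
    then show "M n ((cocycle B n m ** (mat 1 - P m)) *v x) \<le> K * (t/\<sigma>')^(m-n) * M m x"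
      using b2[OF mn, of x] by linarith
  qed
qed

lemma aux1:
  fixes K1 K2 X Mv :: real
  assumes "0 \<le> X" "0 \<le> Mv" "0 \<le> K2"
  shows "K1 * X * (K2 * Mv) \<le> (K1*K2+K2) * X * Mv"
proof -
  have "(K1*K2+K2) * X * Mv - K1 * X * (K2 * Mv) = K2 * X * Mv" by (simp add: algebra_simps)
  moreover have "K2 * X * Mv \<ge> 0" using assms by simp
  ultimately show ?thesis by linarith
qed

lemma aux2:
  fixes K1 K2 p q Mv :: real
  assumes "0 \<le> p" "p \<le> q" "0 \<le> Mv" "0 < K2" "0 \<le> K1"
  shows "K2 * p * Mv \<le> (K1*K2+K2) * q * Mv"
proof -
  have "K2 \<le> K1*K2+K2" using assms by simp
  then have "K2 * p \<le> (K1*K2+K2) * q" using assms by (intro mult_mono) auto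
  then show ?thesis using assms by (intro mult_right_mono) auto
qed

lemma L3:
  assumes g1: "good \<sigma>1 P1 K1 \<theta>1" and g2: "good \<sigma>2 P2 K2 \<theta>2"
    and s1: "0 < \<sigma>1" and le1: "\<sigma>1 \<le> \<sigma>" and le2: "\<sigma> \<le> \<sigma>2"
    and eq: "\<forall>n. fixp (P1 n) = fixp (P2 n)"
  shows "good \<sigma> P2 (K1*K2+K2) (max \<theta>1 \<theta>2)"
proof -
  have K1: "K1 > 0" and th1: "0 < \<theta>1" "\<theta>1 < 1"
    and b1: "\<And>m n x. n \<le> m \<Longrightarrow> M m ((cocycle B m n ** P1 n) *v x) \<le> K1 * (\<sigma>1*\<theta>1)^(m-n) * M n x"
    using g1 unfolding good_def by auto
  have K2: "K2 > 0" and th2: "0 < \<theta>2" "\<theta>2 < 1" and inv: "\<forall>n. P2 n ** P2 n = P2 n \<and> B n ** P2 n = P2 (Suc n) ** B n"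
    and b2: "\<And>m n x. n \<le> m \<Longrightarrow> M n ((cocycle B n m ** (mat 1 - P2 m)) *v x) \<le> K2 * (\<theta>2/\<sigma>2)^(m-n) * M m x"
    using g2 unfolding good_def by auto
  define t where "t = max \<theta>1 \<theta>2"
  have t0: "0 < t" "t < 1" using th1 th2 by (auto simp: t_def)
  show ?thesis unfolding good_def t_def[symmetric]
  proof (intro conjI t0 inv allI impI)
    show "K1*K2+K2 > 0" using K1 K2 by (simp add: add_pos_pos)
    fix m n x assume mn: "n \<le> (m::nat)"
    let ?y = "P2 n *v x"
    have "?y \<in> fixp (P2 n)" using inv by (simp add: fixp_def matrix_vector_mul_assoc)
    then have "?y \<in> fixp (P1 n)" using eq by simp
    then have y1: "P1 n *v ?y = ?y" by (simp add: fixp_def)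
    have "M m ((cocycle B m n ** P2 n) *v x) = M m ((cocycle B m n ** P1 n) *v ?y)"
      using y1 by (simp add: matrix_vector_mul_assoc[symmetric])
    also have "\<dots> \<le> K1 * (\<sigma>1*\<theta>1)^(m-n) * M n ?y" using b1[OF mn] by blast
    also have "\<dots> \<le> K1 * (\<sigma>*t)^(m-n) * (K2 * M n x)"
    proof -
      have "\<sigma>1*\<theta>1 \<le> \<sigma>*t" using s1 le1 th1 by (intro mult_mono) (auto simp: t_def)
      then have p: "(\<sigma>1*\<theta>1)^(m-n) \<le> (\<sigma>*t)^(m-n)" using s1 th1 by (intro power_mono) auto
      have "K1 * (\<sigma>1*\<theta>1)^(m-n) \<le> K1 * (\<sigma>*t)^(m-n)" using p K1 by simp
      moreover have "0 \<le> K1 * (\<sigma>*t)^(m-n)" using K1 s1 le1 t0 by simp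
      moreover have "M n ?y \<le> K2 * M n x" by (rule good_Pbound[OF g2])
      ultimately show ?thesis using M_nonneg by (rule_tac mult_mono) auto
    qed
    also have "\<dots> \<le> (K1*K2+K2) * (\<sigma>*t)^(m-n) * M n x"
      by (rule aux1) (use K2 M_nonneg[of n x] s1 le1 t0 in auto)
    finally show "M m ((cocycle B m n ** P2 n) *v x) \<le> (K1*K2+K2) * (\<sigma>*t)^(m-n) * M n x" .
    have "M n ((cocycle B n m ** (mat 1 - P2 m)) *v x) \<le> K2 * (\<theta>2/\<sigma>2)^(m-n) * M m x" using b2[OF mn] .
    also have "\<dots> \<le> (K1*K2+K2) * (t/\<sigma>)^(m-n) * M m x"
    proof (rule aux2)
      have "\<theta>2/\<sigma>2 \<le> t/\<sigma>" using s1 le1 le2 th2 t0 by (intro frac_le) (auto simp: t_def)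
      then show "(\<theta>2/\<sigma>2)^(m-n) \<le> (t/\<sigma>)^(m-n)" using th2 s1 le1 le2 by (intro power_mono) auto
      show "0 \<le> (\<theta>2/\<sigma>2)^(m-n)" using th2 s1 le1 le2 by simp
    qed (use K1 K2 M_nonneg in auto)
    finally show "M n ((cocycle B n m ** (mat 1 - P2 m)) *v x) \<le> (K1*K2+K2) * (t/\<sigma>)^(m-n) * M m x" .
  qed
qed

lemma L4a:
  assumes "0 < \<sigma>" "\<sigma> \<le> 1/(2*g)"
  shows "good \<sigma> (\<lambda>_. 0) K0 (1/2)"
  unfolding good_def
proof (intro conjI allI impI)
  fix m n x assume mn: "n \<le> (m::nat)"
  show "M m ((cocycle B m n ** 0) *v x) \<le> K0 * (\<sigma>*(1/2))^(m-n) * M n x"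
    using K0 assms M_nonneg by simp
  have "g \<le> (1/2)/\<sigma>" using assms g by (simp add: field_simps)
  then have "K0 * g^(m-n) * M m x \<le> K0 * ((1/2)/\<sigma>)^(m-n) * M m x"
    using K0 M_nonneg g by (intro mult_right_mono mult_left_mono power_mono) auto
  then show "M n ((cocycle B n m ** (mat 1 - 0)) *v x) \<le> K0 * ((1/2)/\<sigma>)^(m-n) * M m x"
    using grow[OF mn, of x] by simp
qed (use K0 invB in auto)

lemma L4b:
  assumes "2*g \<le> \<sigma>"
  shows "good \<sigma> (\<lambda>_. mat 1) K0 (1/2)"
  unfolding good_def
proof (intro conjI allI impI)
  fix m n x assume mn: "n \<le> (m::nat)"
  show "M n ((cocycle B n m ** (mat 1 - mat 1)) *v x) \<le> K0 * ((1/2)/\<sigma>)^(m-n) * M m x"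
    using K0 assms M_nonneg g by simp
  have "g \<le> \<sigma>*(1/2)" using assms g by (simp add: field_simps)
  then have "K0 * g^(m-n) * M n x \<le> K0 * (\<sigma>*(1/2))^(m-n) * M n x"
    using K0 M_nonneg g by (intro mult_right_mono mult_left_mono power_mono) auto
  then show "M m ((cocycle B m n ** mat 1) *v x) \<le> K0 * (\<sigma>*(1/2))^(m-n) * M n x"
    using grow[OF mn, of x] by simp
qed (use K0 invB in auto)

lemma fixp_subspace: "P ** P = P \<Longrightarrow> subspace (fixp P)"
  unfolding subspace_def fixp_def
  by (auto simp: matrix_vector_right_distrib matrix_vector_mult_scaleR)

lemma S_mono:
  assumes "0 < \<sigma>1" "\<sigma>1 \<le> \<sigma>2"
  shows "S \<sigma>1 n \<subseteq> S \<sigma>2 n"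
proof
  fix x assume "x \<in> S \<sigma>1 n"
  then obtain C where C: "\<And>m. m \<ge> n \<Longrightarrow> M m (cocycle B m n *v x) \<le> C * \<sigma>1^(m-n)"
    unfolding S_def by blast
  have "M m (cocycle B m n *v x) \<le> max C 0 * \<sigma>2^(m-n)" if "m \<ge> n" for m
  proof -
    have "C * \<sigma>1^(m-n) \<le> max C 0 * \<sigma>1^(m-n)" using assms by (intro mult_right_mono) auto
    also have "\<dots> \<le> max C 0 * \<sigma>2^(m-n)" using assms by (intro mult_left_mono power_mono) auto
    finally show ?thesis using C[OF that] by linarith
  qed
  then show "x \<in> S \<sigma>2 n" unfolding S_def by blast
qed

definition rho :: "real set" where
  "rho = {\<sigma>. \<sigma> > 0 \<and> (\<exists>P K \<theta>. good \<sigma> P K \<theta>)}"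

definition ind :: "real \<Rightarrow> nat" where
  "ind \<sigma> = dim (S \<sigma> 0)"

lemma H1: "ind \<sigma> \<le> CARD('n)"
  unfolding ind_def by (rule dim_subset_UNIV_cart)

lemma H2: "\<sigma>1 \<in> rho \<Longrightarrow> \<sigma>1 \<le> \<sigma>2 \<Longrightarrow> ind \<sigma>1 \<le> ind \<sigma>2"
proof -
  assume a: "\<sigma>1 \<in> rho" "\<sigma>1 \<le> \<sigma>2"
  then have "S \<sigma>1 0 \<subseteq> S \<sigma>2 0" by (intro S_mono) (auto simp: rho_def)
  then show ?thesis unfolding ind_def by (rule dim_subset)
qed

lemma H3:
  assumes "\<sigma>1 \<in> rho" "\<sigma>2 \<in> rho" "\<sigma>1 \<le> \<sigma>" "\<sigma> \<le> \<sigma>2" "ind \<sigma>1 = ind \<sigma>2"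
  shows "\<sigma> \<in> rho"
proof -
  obtain P1 K1 t1 where g1: "good \<sigma>1 P1 K1 t1" and s1: "\<sigma>1 > 0" using assms(1) rho_def by auto
  obtain P2 K2 t2 where g2: "good \<sigma>2 P2 K2 t2" and s2: "\<sigma>2 > 0" using assms(2) rho_def by auto
  have e1: "S \<sigma>1 0 = fixp (P1 0)" by (rule L1[OF g1 s1])
  have e2: "S \<sigma>2 0 = fixp (P2 0)" by (rule L1[OF g2 s2])
  have "S \<sigma>1 0 = S \<sigma>2 0"
  proof (rule subspace_dim_equal)
    show "subspace (S \<sigma>1 0)" using e1 fixp_subspace g1 good_def by auto
    show "subspace (S \<sigma>2 0)" using e2 fixp_subspace g2 good_def by auto
    show "S \<sigma>1 0 \<subseteq> S \<sigma>2 0" using S_mono s1 assms by auto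
    show "dim (S \<sigma>2 0) \<le> dim (S \<sigma>1 0)" using assms(5) ind_def by simp
  qed
  then have "fixp (P1 0) = fixp (P2 0)" using e1 e2 by simp
  then have eq0: "fixp (P1 0) = fixp (P2 0)" .
  have "fixp (P1 n) = fixp (P2 n)" for n
    by (simp only: L_image[OF g1, of n] L_image[OF g2, of n] eq0)
  then have "\<forall>n. fixp (P1 n) = fixp (P2 n)" by blast
  then have "good \<sigma> P2 (K1*K2+K2) (max t1 t2)" using L3[OF g1 g2 s1] assms by simp
  then show ?thesis using rho_def s1 assms by auto
qed

lemma H4:
  assumes "\<sigma> \<in> rho"
  shows "\<exists>lo hi. lo < \<sigma> \<and> \<sigma> < hi \<and> (\<forall>u. lo < u \<and> u < hi \<longrightarrow> u \<in> rho \<and> ind u = ind \<sigma>)"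
proof -
  obtain P K t where gd: "good \<sigma> P K t" and sp: "\<sigma> > 0" using assms rho_def by auto
  have t: "0 < t" "t < 1" using gd good_def by auto
  show ?thesis
  proof (intro exI conjI allI impI)
    show "\<sigma>*t < \<sigma>" using sp t by simp
    show "\<sigma> < \<sigma>/t" using sp t by (simp add: field_simps)
    fix u assume u: "\<sigma>*t < u \<and> u < \<sigma>/t"
    have g': "good u P K (max (\<sigma>*t/u) (t*u/\<sigma>))" using L2[OF gd sp] u by auto
    have "\<sigma>*t > 0" using sp t by simp
    then have s0: "u > 0" using u by linarith
    show "u \<in> rho" using g' s0 rho_def by auto
    show "ind u = ind \<sigma>" unfolding ind_def using L1[OF g' s0] L1[OF gd sp] by simp
  qed
qed

lemma H5: "0 < \<sigma> \<Longrightarrow> \<sigma> \<le> 1/(2*g) \<Longrightarrow> \<sigma> \<in> rho \<and> ind \<sigma> = 0"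
proof -
  assume a: "0 < \<sigma>" "\<sigma> \<le> 1/(2*g)"
  have gd: "good \<sigma> (\<lambda>_. 0) K0 (1/2)" using L4a[OF a] .
  have "fixp (0::real^'n^'n) = {0}" by (auto simp: fixp_def)
  then have "S \<sigma> 0 = {0}" using L1[OF gd a(1)] by simp
  then have "ind \<sigma> = 0" unfolding ind_def by simp
  moreover have "\<sigma> \<in> rho" unfolding rho_def using gd a(1) by blast
  ultimately show ?thesis by simp
qed

lemma H6: "2*g \<le> \<sigma> \<Longrightarrow> \<sigma> \<in> rho \<and> ind \<sigma> = CARD('n)"
proof -
  assume a: "2*g \<le> \<sigma>"
  have gd: "good \<sigma> (\<lambda>_. mat 1) K0 (1/2)" using L4b[OF a] .
  have s: "\<sigma> > 0" using a g by simp
  have "fixp (mat 1::real^'n^'n) = UNIV" by (auto simp: fixp_def)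
  then have "S \<sigma> 0 = UNIV" using L1[OF gd s] by simp
  then have "ind \<sigma> = CARD('n)" unfolding ind_def using dimU by simp
  moreover have "\<sigma> \<in> rho" unfolding rho_def using gd s by blast
  ultimately show ?thesis by simp
qed

end

lemma pw2: "((2::real)^m / 2^n) powr x = exp (x * ln 2 * (real m - real n))"
  by (simp add: powr_def ln_div ln_realpow algebra_simps)

lemma exp_bound:
  fixes n m i j :: nat
  assumes "1 \<le> n" "n \<le> m" "2^i \<le> n" "m < 2^(j+1)" "lam > 0"
  shows "exp (-lam * (real j - real i)) \<le> 2 powr (lam/ln 2) * (real m / real n) powr (-(lam/ln 2))"
proof -
  define L where "L = lam / ln 2"
  have l2: "ln (2::real) > 0" by simp
  have L0: "L > 0" using assms l2 by (simp add: L_def)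
  have n0: "real n > 0" "real m > 0" using assms by auto
  have "real m < real (2^(j+1))" using assms(4) by (simp only: of_nat_less_iff)
  then have "real m \<le> 2^(j+1)" by simp
  then have "ln (real m) \<le> ln (2^(j+1))" using n0 by (subst ln_le_cancel_iff) auto
  moreover have "ln ((2::real)^(j+1)) = real (j+1) * ln 2" by (rule ln_realpow)
  ultimately have h1: "ln (real m) \<le> (real j + 1) * ln 2" by (simp add: add.commute)
  have "real (2^i) \<le> real n" using assms(3) by (simp only: of_nat_le_iff)
  then have "(2::real)^i \<le> real n" by simp
  then have "ln (2^i) \<le> ln (real n)" using n0 by (subst ln_le_cancel_iff) auto
  then have h2: "real i * ln 2 \<le> ln (real n)" by (simp add: ln_realpow)
  have lnr: "ln (real m / real n) \<le> (real j + 1 - real i) * ln 2"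
    using n0 h1 h2 by (simp add: ln_div algebra_simps)
  have "2 powr L * (real m / real n) powr (-L) = exp (L * ln 2 - L * ln (real m / real n))"
    using n0 by (simp add: powr_def exp_diff exp_minus field_simps)
  also have "\<dots> \<ge> exp (L * ln 2 - L * ((real j + 1 - real i) * ln 2))"
    using lnr L0 by (simp add: mult_left_mono)
  also have "L * ln 2 - L * ((real j + 1 - real i) * ln 2) = -lam * (real j - real i)"
    using l2 by (simp add: L_def field_simps)
  finally show ?thesis by (simp add: L_def)
qed

lemma ratio_bound:
  fixes n i :: nat
  assumes "2^i \<le> n" "n < 2^(i+1)" "a0 \<ge> 0"
  shows "(real n / 2^i) powr a0 \<le> 2 powr a0"
proof -
  have "real n < real (2^(i+1))" using assms(2) by (simp only: of_nat_less_iff)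
  then have "real n < 2 * 2^i" by simp
  then have "real n / 2^i \<le> 2" by (simp add: field_simps)
  then show ?thesis using assms by (intro powr_mono2) auto
qed

lemma chain3:
  fixes A1 A2 A3 A4 c1 c2 c3 :: real
  assumes "0 \<le> c1" "0 \<le> c2" "A1 \<le> c1 * A2" "A2 \<le> c2 * A3" "A3 \<le> c3 * A4"
  shows "A1 \<le> c1 * c2 * c3 * A4"
proof -
  have "c1 * A2 \<le> c1 * (c2 * A3)" using assms by (intro mult_left_mono) auto
  moreover have "c2 * A3 \<le> c2 * (c3 * A4)" using assms by (intro mult_left_mono) auto
  then have "c1 * (c2 * A3) \<le> c1 * (c2 * (c3 * A4))" using assms by (intro mult_left_mono) auto
  ultimately show ?thesis using assms by (simp add: mult_ac)
qed

lemma const3: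
  fixes c1 c2 c3 d1 d2 d3 :: real
  assumes "0 \<le> c1" "c1 \<le> d1" "0 \<le> c2" "c2 \<le> d2" "0 \<le> c3" "c3 \<le> d3"
  shows "c1 * c2 * c3 \<le> d1 * d2 * d3"
  using assms by (intro mult_mono) (auto intro: mult_nonneg_nonneg order_trans[OF _ mult_mono])


lemma cancelZ: "(A::real^'n^'n) ** B = C \<Longrightarrow> Z ** A ** B = Z ** C"
  by (metis matrix_mul_assoc)

lemma G:
  fixes E :: "nat \<Rightarrow> real^'n^'n" and N :: "nat \<Rightarrow> real^'n \<Rightarrow> real"
  assumes iE: "\<forall>k\<ge>1. invertible (E k)"
    and norms: "\<forall>n\<ge>1. is_norm (N n)"
    and K0: "K0 > 0" and a0: "a0 \<ge> 0"
    and gr: "\<And>m n x. 1 \<le> n \<Longrightarrow> n \<le> m \<Longrightarrow>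
       N m (cocycle E m n *v x) \<le> K0 * (real m / real n) powr a0 * N n x \<and>
       N n (cocycle E n m *v x) \<le> K0 * (real m / real n) powr a0 * N m x"
  shows "strong_poly_dich E N \<longleftrightarrow> strong_exp_dich (\<lambda>k. cocycle E (2^(k+1)) (2^k)) (\<lambda>k. N (2^k))"
proof
  let ?B = "\<lambda>k. cocycle E (2^(k+1)) (2^k)"
  have cB: "\<And>m n. cocycle ?B m n = cocycle E (2^m) (2^n)" using coc_pow2[OF iE] by simp
  have Nnn: "\<And>n x. 1 \<le> n \<Longrightarrow> N n x \<ge> 0" using norms is_norm_def by blast
  have p1: "\<And>i. 1 \<le> (2::nat)^i" by simp
  have comp: "\<And>a b c. 1 \<le> a \<Longrightarrow> 1 \<le> b \<Longrightarrow> 1 \<le> c \<Longrightarrow> cocycle E a b ** cocycle E b c = cocycle E a c"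
    using coc_comp[OF iE] by blast
  have cinv: "\<And>a b. 1 \<le> a \<Longrightarrow> 1 \<le> b \<Longrightarrow> cocycle E a b ** cocycle E b a = mat 1"
    using coc_inv[OF iE] by blast
  {
    assume "strong_poly_dich E N"
    then obtain K a lam P where K: "K > 0" "lam > 0" "a \<ge> lam"
      and PP: "\<forall>n\<ge>1. P n ** P n = P n \<and> E n ** P n = P (n+1) ** E n"
      and bd: "\<forall>m n x. 1 \<le> n \<longrightarrow> n \<le> m \<longrightarrow>
         N m ((cocycle E m n ** P n) *v x) \<le> K * (real m / real n) powr (-lam) * N n x \<and>
         N n ((cocycle E n m ** (mat 1 - P m)) *v x) \<le> K * (real m / real n) powr (-lam) * N m x \<and>
         N m (cocycle E m n *v x) \<le> K * (real m / real n) powr a * N n x \<and>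
         N n (cocycle E n m *v x) \<le> K * (real m / real n) powr a * N m x"
      unfolding strong_poly_dich_def by blast
    have inv: "\<And>m n. 1 \<le> m \<Longrightarrow> 1 \<le> n \<Longrightarrow> cocycle E m n ** P n = P m ** cocycle E m n"
      using coc_invar[OF iE] PP by simp
    show "strong_exp_dich ?B (\<lambda>k. N (2^k))" unfolding strong_exp_dich_def
    proof (intro exI conjI allI impI)
      show "K > 0" using K by simp
      show "lam * ln 2 > 0" using K by simp
      show "lam * ln 2 \<le> a * ln 2" using K by simp
      fix n
      show "P (2^n) ** P (2^n) = P (2^n)" using PP p1 by blast
      show "?B n ** P (2^n) = P (2^(n+1)) ** ?B n" using inv p1 by blast
      fix m x assume mn: "n \<le> m"
      have h: "1 \<le> (2::nat)^n" "(2::nat)^n \<le> 2^m" using mn by (auto intro: power_increasing)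
      note b = bd[rule_format, OF h, of x]
      have e1: "(real (2^m) / real (2^n)) powr (-lam) = exp (-(lam * ln 2) * (real m - real n))"
        using pw2[of m n "-lam"] by simp
      have e2: "(real (2^m) / real (2^n)) powr a = exp ((a * ln 2) * (real m - real n))"
        using pw2[of m n a] by simp
      show "N (2^m) ((cocycle ?B m n ** P (2^n)) *v x) \<le> K * exp (-(lam * ln 2) * (real m - real n)) * N (2^n) x"
        using b e1 cB by metis
      show "N (2^n) ((cocycle ?B n m ** (mat 1 - P (2^m))) *v x) \<le> K * exp (-(lam * ln 2) * (real m - real n)) * N (2^m) x"
        using b e1 cB by metis
      show "N (2^m) (cocycle ?B m n *v x) \<le> K * exp ((a * ln 2) * (real m - real n)) * N (2^n) x"
        using b e2 cB by metis
      show "N (2^n) (cocycle ?B n m *v x) \<le> K * exp ((a * ln 2) * (real m - real n)) * N (2^m) x"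
        using b e2 cB by metis
    qed
  }
  {
    assume "strong_exp_dich ?B (\<lambda>k. N (2^k))"
    then obtain K' a' lam' P' where K': "K' > 0" "lam' > 0" "a' \<ge> lam'"
      and PP': "\<forall>n. P' n ** P' n = P' n \<and> ?B n ** P' n = P' (n+1) ** ?B n"
      and bd': "\<forall>m n x. n \<le> m \<longrightarrow>
         N (2^m) ((cocycle ?B m n ** P' n) *v x) \<le> K' * exp (-lam' * (real m - real n)) * N (2^n) x \<and>
         N (2^n) ((cocycle ?B n m ** (mat 1 - P' m)) *v x) \<le> K' * exp (-lam' * (real m - real n)) * N (2^m) x \<and>
         N (2^m) (cocycle ?B m n *v x) \<le> K' * exp (a' * (real m - real n)) * N (2^n) x \<and>
         N (2^n) (cocycle ?B n m *v x) \<le> K' * exp (a' * (real m - real n)) * N (2^m) x"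
      unfolding strong_exp_dich_def by blast
    have iB: "\<forall>k\<ge>0. invertible (?B k)" using coc_invertible[OF iE] p1 by simp
    have invB: "\<And>m n. cocycle ?B m n ** P' n = P' m ** cocycle ?B m n"
      using coc_invar[OF iB] PP' by simp
    define P where "P k = cocycle E k 1 ** P' 0 ** cocycle E 1 k" for k
    have Pp: "P' j = cocycle E (2^j) 1 ** P' 0 ** cocycle E 1 (2^j)" for j
    proof -
      have "cocycle E (2^j) 1 ** P' 0 = P' j ** cocycle E (2^j) 1" using invB[of j 0] cB[of j 0] by simp
      then have "cocycle E (2^j) 1 ** P' 0 ** cocycle E 1 (2^j) = P' j ** cocycle E (2^j) 1 ** cocycle E 1 (2^j)"
        by simp
      also have "\<dots> = P' j" using cancelZ[OF cinv[OF p1, of 1]] by simp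
      finally show ?thesis by simp
    qed
    have Pn: "P n = cocycle E n (2^i) ** P' i ** cocycle E (2^i) n" if n1: "1 \<le> n" for n i
    proof -
      have "cocycle E n (2^i) ** P' i ** cocycle E (2^i) n
          = cocycle E n (2^i) ** (cocycle E (2^i) 1 ** P' 0 ** cocycle E 1 (2^i)) ** cocycle E (2^i) n"
        by (subst Pp[of i]) (rule refl)
      also have "\<dots> = (cocycle E n (2^i) ** cocycle E (2^i) 1) ** P' 0 ** (cocycle E 1 (2^i) ** cocycle E (2^i) n)"
        by (simp add: matrix_mul_assoc)
      also have "\<dots> = P n" using comp n1 p1 by (simp add: P_def)
      finally show ?thesis by simp
    qed
    define lam where "lam = lam' / ln 2"
    have lam0: "lam > 0" using K' by (simp add: lam_def)
    define Kc where "Kc = (K0 * 2 powr a0) * (K' * 2 powr lam) * (K0 * 2 powr a0)"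
    have Kc0: "Kc > 0" using K0 K' by (simp add: Kc_def)
    have ex2: "\<exists>i. 2^i \<le> n \<and> n < 2^(i+1)" if "1 \<le> n" for n :: nat
      using ex_power_ivl1[of 2 n] that by simp
    show "strong_poly_dich E N" unfolding strong_poly_dich_def
    proof (intro exI conjI allI impI)
      show "Kc + K0 > 0" using Kc0 K0 by simp
      show "lam > 0" by (rule lam0)
      show "lam \<le> max a0 lam" by simp
    next
      fix n :: nat assume n1: "1 \<le> n"
      have X: "cocycle E 1 n ** cocycle E n 1 = mat 1" using cinv n1 by simp
      have X2: "P' 0 ** P' 0 = P' 0" using PP' by simp
      have "P n ** P n = cocycle E n 1 ** P' 0 ** (cocycle E 1 n ** cocycle E n 1) ** P' 0 ** cocycle E 1 n"
        by (simp only: P_def matrix_mul_assoc)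
      also have "\<dots> = cocycle E n 1 ** (P' 0 ** P' 0) ** cocycle E 1 n"
        by (simp only: X matrix_mul_rid matrix_mul_assoc)
      also have "\<dots> = P n" by (simp only: X2 P_def)
      finally show "P n ** P n = P n" .
      have Y1: "cocycle E (n+1) n ** cocycle E n 1 = cocycle E (n+1) 1" using comp n1 by simp
      have Y2: "cocycle E 1 (n+1) ** cocycle E (n+1) n = cocycle E 1 n" using comp n1 by simp
      have En: "E n = cocycle E (n+1) n" using coc_step[of E n, symmetric] by simp
      show "E n ** P n = P (n+1) ** E n"
        unfolding P_def En by (simp only: Y1 cancelZ[OF Y2] matrix_mul_assoc)
    next
      fix m n :: nat and x assume n1: "1 \<le> n" and mn: "n \<le> m"
      have m1: "1 \<le> m" using n1 mn by simp
      obtain i where i: "2^i \<le> n" "n < 2^(i+1)" using ex2[OF n1] by blast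
      obtain j where j: "2^j \<le> m" "m < 2^(j+1)" using ex2[OF m1] by blast
      have ij: "i \<le> j"
      proof (rule ccontr)
        assume "\<not> i \<le> j"
        then have "(2::nat)^(j+1) \<le> 2^i" by (intro power_increasing) auto
        then show False using i j mn by simp
      qed
      have rn: "real n > 0" "real m > 0" "real m / real n \<ge> 1" using n1 mn by auto
      have rb: "(real n / 2^i) powr a0 \<le> 2 powr a0" "(real m / 2^j) powr a0 \<le> 2 powr a0"
        using ratio_bound i j a0 by auto
      have eb: "K' * exp (-lam' * (real j - real i)) \<le> K' * (2 powr lam * (real m / real n) powr (-lam))"
        using exp_bound[OF n1 mn i(1) j(2) K'(2)] K' by (simp add: lam_def)
      have fin: "c1 * c2 * c3 * A4 \<le> (Kc + K0) * (real m / real n) powr (-lam) * A4"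
        if "0 \<le> c1" "c1 \<le> K0 * 2 powr a0" "0 \<le> c2" "c2 \<le> K' * (2 powr lam * (real m / real n) powr (-lam))"
           "0 \<le> c3" "c3 \<le> K0 * 2 powr a0" "0 \<le> A4" for c1 c2 c3 A4
      proof -
        have "c1 * c2 * c3 \<le> (K0 * 2 powr a0) * (K' * (2 powr lam * (real m / real n) powr (-lam))) * (K0 * 2 powr a0)"
          using that by (intro const3) auto
        also have "\<dots> = Kc * (real m / real n) powr (-lam)" by (simp add: Kc_def mult_ac)
        also have "\<dots> \<le> (Kc + K0) * (real m / real n) powr (-lam)" using K0 by (intro mult_right_mono) auto
        finally show ?thesis using that(7) by (intro mult_right_mono) auto
      qed
      have id1: "cocycle E m n ** P n = cocycle E m (2^j) ** (cocycle ?B j i ** P' i) ** cocycle E (2^i) n"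
        using Pn[OF n1, of i] comp n1 m1 p1 cB by (simp add: matrix_mul_assoc)
      let ?y = "cocycle E (2^i) n *v x"
      let ?w = "(cocycle ?B j i ** P' i) *v ?y"
      have "N m ((cocycle E m n ** P n) *v x) = N m (cocycle E m (2^j) *v ?w)"
        unfolding id1 by (simp add: matrix_vector_mul_assoc matrix_mul_assoc)
      also have "\<dots> \<le> (K0 * (real m / 2^j) powr a0) * (K' * exp (-lam' * (real j - real i))) * (K0 * (real n / 2^i) powr a0) * N n x"
      proof (rule chain3)
        show "N m (cocycle E m (2^j) *v ?w) \<le> K0 * (real m / 2^j) powr a0 * N (2^j) ?w"
          using gr[of "2^j" m ?w] j by simp
        show "N (2^j) ?w \<le> K' * exp (-lam' * (real j - real i)) * N (2^i) ?y"
          using bd'[rule_format, OF ij] by blast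
        show "N (2^i) ?y \<le> K0 * (real n / 2^i) powr a0 * N n x"
          using gr[of "2^i" n x] i by simp
      qed (use K0 K' in auto)
      also have "\<dots> \<le> (Kc + K0) * (real m / real n) powr (-lam) * N n x"
        using rb eb K0 K' Nnn[OF n1] by (intro fin) auto
      finally show "N m ((cocycle E m n ** P n) *v x) \<le> (Kc + K0) * (real m / real n) powr (-lam) * N n x" .
      have Qm: "mat 1 - P m = cocycle E m (2^j) ** (mat 1 - P' j) ** cocycle E (2^j) m"
        using Pn[OF m1, of j] cinv[OF m1 p1]
        by (simp add: mat_sub_ldistrib mat_sub_rdistrib matrix_mul_assoc)
      have id2: "cocycle E n m ** (mat 1 - P m) = cocycle E n (2^i) ** (cocycle ?B i j ** (mat 1 - P' j)) ** cocycle E (2^j) m"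
        unfolding Qm using comp n1 m1 p1 cB by (simp add: matrix_mul_assoc)
      let ?y = "cocycle E (2^j) m *v x"
      let ?w = "(cocycle ?B i j ** (mat 1 - P' j)) *v ?y"
      have "N n ((cocycle E n m ** (mat 1 - P m)) *v x) = N n (cocycle E n (2^i) *v ?w)"
        unfolding id2 by (simp add: matrix_vector_mul_assoc matrix_mul_assoc)
      also have "\<dots> \<le> (K0 * (real n / 2^i) powr a0) * (K' * exp (-lam' * (real j - real i))) * (K0 * (real m / 2^j) powr a0) * N m x"
      proof (rule chain3)
        show "N n (cocycle E n (2^i) *v ?w) \<le> K0 * (real n / 2^i) powr a0 * N (2^i) ?w"
          using gr[of "2^i" n ?w] i by simp
        show "N (2^i) ?w \<le> K' * exp (-lam' * (real j - real i)) * N (2^j) ?y"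
          using bd'[rule_format, OF ij] by blast
        show "N (2^j) ?y \<le> K0 * (real m / 2^j) powr a0 * N m x"
          using gr[of "2^j" m x] j by simp
      qed (use K0 K' in auto)
      also have "\<dots> \<le> (Kc + K0) * (real m / real n) powr (-lam) * N m x"
        using rb eb K0 K' Nnn[OF m1] by (intro fin) auto
      finally show "N n ((cocycle E n m ** (mat 1 - P m)) *v x) \<le> (Kc + K0) * (real m / real n) powr (-lam) * N m x" .
      have gg: "K0 * (real m / real n) powr a0 \<le> (Kc + K0) * (real m / real n) powr (max a0 lam)"
        using rn Kc0 K0 by (intro mult_mono powr_mono) auto
      show "N m (cocycle E m n *v x) \<le> (Kc + K0) * (real m / real n) powr (max a0 lam) * N n x"
        using gr[OF n1 mn, of x] gg Nnn[OF n1] by (meson mult_right_mono order_trans)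
      show "N n (cocycle E n m *v x) \<le> (Kc + K0) * (real m / real n) powr (max a0 lam) * N m x"
        using gr[OF n1 mn, of x] gg Nnn[OF m1] by (meson mult_right_mono order_trans)
    qed
  }
qed

lemma exp_pow:
  assumes "n \<le> m" shows "exp (c * (real m - real n)) = exp c ^ (m - n)"
proof -
  have e: "real m - real n = real (m - n)" by (rule of_nat_diff[OF assms, symmetric])
  have "exp (c * (real m - real n)) = exp (real (m - n) * c)" unfolding e by (rule arg_cong[where f = exp], rule mult.commute)
  also have "\<dots> = exp c ^ (m - n)" by (rule exp_of_nat_mult)
  finally show ?thesis .
qed

lemma mat_scal_r: "(A::real^'n^'m) ** (k *\<^sub>R B) = k *\<^sub>R (A ** B)"
  by (simp add: matrix_scalar_ac scalar_matrix_assoc)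

lemma mat_scal_l: "(k *\<^sub>R (A::real^'n^'m)) ** B = k *\<^sub>R (A ** B)"
  by (simp add: scalar_matrix_assoc)

context edsys
begin

lemma M_scale: "M n (c *\<^sub>R v) = \<bar>c\<bar> * M n v"
  using normM unfolding is_norm_def by blast

lemma scaled_coc:
  assumes sp: "\<sigma> > 0" and mn: "n \<le> m"
  shows "cocycle (\<lambda>k. (1/\<sigma>) *\<^sub>R B k) m n = ((1/\<sigma>)^(m-n)) *\<^sub>R cocycle B m n"
    and "cocycle (\<lambda>k. (1/\<sigma>) *\<^sub>R B k) n m = (\<sigma>^(m-n)) *\<^sub>R cocycle B n m"
proof -
  let ?q = "\<lambda>k. (1/\<sigma>)^k"
  have q: "\<forall>k\<ge>0. ?q k \<noteq> 0" using sp by simp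
  have D: "\<forall>k\<ge>0. (1/\<sigma>) *\<^sub>R B k = (?q (Suc k) / ?q k) *\<^sub>R B k" using sp by simp
  have c: "\<And>a b. cocycle (\<lambda>k. (1/\<sigma>) *\<^sub>R B k) a b = (?q a / ?q b) *\<^sub>R cocycle B a b"
  proof -
    fix a b
    show "cocycle (\<lambda>k. (1/\<sigma>) *\<^sub>R B k) a b = (?q a / ?q b) *\<^sub>R cocycle B a b"
      by (rule coc_scale[OF invB0, where q = "\<lambda>k. (1/\<sigma>)^k" and D = "\<lambda>k. (1/\<sigma>) *\<^sub>R B k", OF q D]) simp_all
  qed
  obtain k where k: "m = n + k" using mn le_Suc_ex by blast
  have e1: "?q m / ?q n = (1/\<sigma>)^(m-n)" using sp k by (simp add: power_add)
  have e2: "?q n / ?q m = \<sigma>^(m-n)" using sp k by (simp add: power_add power_one_over)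
  show "cocycle (\<lambda>k. (1/\<sigma>) *\<^sub>R B k) m n = ((1/\<sigma>)^(m-n)) *\<^sub>R cocycle B m n" using c e1 by simp
  show "cocycle (\<lambda>k. (1/\<sigma>) *\<^sub>R B k) n m = (\<sigma>^(m-n)) *\<^sub>R cocycle B n m" using c e2 by simp
qed

lemma ED_char:
  assumes sp: "\<sigma> > 0"
  shows "strong_exp_dich (\<lambda>n. (1/\<sigma>) *\<^sub>R B n) M \<longleftrightarrow> (\<exists>P K \<theta>. good \<sigma> P K \<theta>)"
proof
  let ?D = "\<lambda>n. (1/\<sigma>) *\<^sub>R B n"
  have sv: "\<And>m n x (P::real^'n^'n). n \<le> m \<Longrightarrow> (cocycle ?D m n ** P) *v x = (1/\<sigma>)^(m-n) *\<^sub>R ((cocycle B m n ** P) *v x)"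
    using scaled_coc[OF sp] by (simp add: mat_scal_l scaleR_matrix_vector_assoc[symmetric])
  have sv2: "\<And>m n x (P::real^'n^'n). n \<le> m \<Longrightarrow> (cocycle ?D n m ** P) *v x = \<sigma>^(m-n) *\<^sub>R ((cocycle B n m ** P) *v x)"
    using scaled_coc[OF sp] by (simp add: mat_scal_l scaleR_matrix_vector_assoc[symmetric])
  have inv_iff: "\<And>P n. (?D n ** P n = P (n+1) ** ?D n) \<longleftrightarrow> (B n ** P n = P (Suc n) ** B n)"
    using sp by (simp only: mat_scal_l mat_scal_r) simp
  {
    assume "strong_exp_dich ?D M"
    then obtain K a lam P where K: "K > 0" "lam > 0" "a \<ge> lam"
      and PP: "\<forall>n. P n ** P n = P n \<and> ?D n ** P n = P (n+1) ** ?D n"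
      and bd: "\<forall>m n x. n \<le> m \<longrightarrow>
         M m ((cocycle ?D m n ** P n) *v x) \<le> K * exp (-lam * (real m - real n)) * M n x \<and>
         M n ((cocycle ?D n m ** (mat 1 - P m)) *v x) \<le> K * exp (-lam * (real m - real n)) * M m x \<and>
         M m (cocycle ?D m n *v x) \<le> K * exp (a * (real m - real n)) * M n x \<and>
         M n (cocycle ?D n m *v x) \<le> K * exp (a * (real m - real n)) * M m x"
      unfolding strong_exp_dich_def by blast
    let ?t = "exp (-lam)"
    have "good \<sigma> P K ?t" unfolding good_def
    proof (intro conjI allI impI)
      show "K > 0" "0 < ?t" "?t < 1" using K by auto
      fix n show "P n ** P n = P n" using PP by simp
      show "B n ** P n = P (Suc n) ** B n" using PP inv_iff by blast
      fix m x assume mn: "n \<le> m"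
      have ee: "exp (-lam * (real m - real n)) = ?t^(m-n)" using exp_pow[OF mn, of "-lam"] by simp
      have "(1/\<sigma>)^(m-n) * M m ((cocycle B m n ** P n) *v x) \<le> K * ?t^(m-n) * M n x"
        using bd[rule_format, OF mn, of x] sv[OF mn] ee sp by (simp add: M_scale)
      then have "M m ((cocycle B m n ** P n) *v x) \<le> \<sigma>^(m-n) * (K * ?t^(m-n) * M n x)"
        using sp by (simp add: power_one_over field_simps)
      then show "M m ((cocycle B m n ** P n) *v x) \<le> K * (\<sigma> * ?t)^(m-n) * M n x"
        by (simp add: power_mult_distrib mult_ac)
      have "\<sigma>^(m-n) * M n ((cocycle B n m ** (mat 1 - P m)) *v x) \<le> K * ?t^(m-n) * M m x"
        using bd[rule_format, OF mn, of x] sv2[OF mn] ee sp by (simp add: M_scale)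
      then have "M n ((cocycle B n m ** (mat 1 - P m)) *v x) \<le> (K * ?t^(m-n) * M m x) / \<sigma>^(m-n)"
        using sp by (simp add: field_simps)
      then show "M n ((cocycle B n m ** (mat 1 - P m)) *v x) \<le> K * (?t / \<sigma>)^(m-n) * M m x"
        by (simp add: power_divide)
    qed
    then show "\<exists>P K \<theta>. good \<sigma> P K \<theta>" by blast
  }
  {
    assume "\<exists>P K \<theta>. good \<sigma> P K \<theta>"
    then obtain P K t where gd: "good \<sigma> P K t" by blast
    have K: "K > 0" and t: "0 < t" "t < 1" and PP: "\<forall>n. P n ** P n = P n \<and> B n ** P n = P (Suc n) ** B n"
      and b1: "\<And>m n x. n \<le> m \<Longrightarrow> M m ((cocycle B m n ** P n) *v x) \<le> K * (\<sigma>*t)^(m-n) * M n x"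
      and b2: "\<And>m n x. n \<le> m \<Longrightarrow> M n ((cocycle B n m ** (mat 1 - P m)) *v x) \<le> K * (t/\<sigma>)^(m-n) * M m x"
      using gd unfolding good_def by auto
    define lam where "lam = - ln t"
    define a where "a = max lam (max (ln (g/\<sigma>)) (ln (g*\<sigma>)))"
    define K' where "K' = max K K0"
    have lam0: "lam > 0" using t by (simp add: lam_def)
    have et: "exp (-lam) = t" using t by (simp add: lam_def)
    have ea1: "g/\<sigma> \<le> exp a"
    proof -
      have "ln (g/\<sigma>) \<le> a" by (simp add: a_def)
      then show ?thesis using g sp by (metis exp_le_cancel_iff exp_ln divide_pos_pos less_le_trans zero_less_one)
    qed
    have ea2: "g*\<sigma> \<le> exp a"
    proof -
      have "ln (g*\<sigma>) \<le> a" by (simp add: a_def)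
      then show ?thesis using g sp by (metis exp_le_cancel_iff exp_ln mult_pos_pos less_le_trans zero_less_one)
    qed
    have KK: "K \<le> K'" "K0 \<le> K'" by (auto simp: K'_def)
    show "strong_exp_dich ?D M" unfolding strong_exp_dich_def
    proof (intro exI conjI allI impI)
      show "K' > 0" using K by (simp add: K'_def)
      show "lam > 0" by (rule lam0)
      show "lam \<le> a" by (simp add: a_def)
      fix n show "P n ** P n = P n" using PP by simp
      show "?D n ** P n = P (n+1) ** ?D n" using PP inv_iff by blast
      fix m x assume mn: "n \<le> m"
      let ?k = "m - n"
      have eel: "exp (-lam * (real m - real n)) = t^?k" using exp_pow[OF mn, of "-lam"] et by simp
      have eea: "exp (a * (real m - real n)) = exp a^?k" using exp_pow[OF mn, of a] by simp
      have Mn: "0 \<le> M n x" "0 \<le> M m x" using M_nonneg by auto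
      have p1: "0 \<le> (1/\<sigma>)^?k" "0 \<le> \<sigma>^?k" using sp by auto
      have "M m ((cocycle ?D m n ** P n) *v x) = (1/\<sigma>)^?k * M m ((cocycle B m n ** P n) *v x)"
        using sv[OF mn] sp by (simp add: M_scale)
      also have "\<dots> \<le> (1/\<sigma>)^?k * (K * (\<sigma>*t)^?k * M n x)" using b1[OF mn] p1 by (intro mult_left_mono) auto
      also have "\<dots> = K * t^?k * M n x" using sp by (simp add: power_mult_distrib power_one_over field_simps)
      also have "\<dots> \<le> K' * t^?k * M n x" using KK t Mn by (intro mult_right_mono) auto
      finally show "M m ((cocycle ?D m n ** P n) *v x) \<le> K' * exp (-lam * (real m - real n)) * M n x"
        using eel by simp
      have "M n ((cocycle ?D n m ** (mat 1 - P m)) *v x) = \<sigma>^?k * M n ((cocycle B n m ** (mat 1 - P m)) *v x)"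
        using sv2[OF mn] sp by (simp add: M_scale)
      also have "\<dots> \<le> \<sigma>^?k * (K * (t/\<sigma>)^?k * M m x)" using b2[OF mn] p1 by (intro mult_left_mono) auto
      also have "\<dots> = K * t^?k * M m x" using sp by (simp add: power_divide field_simps)
      also have "\<dots> \<le> K' * t^?k * M m x" using KK t Mn by (intro mult_right_mono) auto
      finally show "M n ((cocycle ?D n m ** (mat 1 - P m)) *v x) \<le> K' * exp (-lam * (real m - real n)) * M m x"
        using eel by simp
      have "M m (cocycle ?D m n *v x) = (1/\<sigma>)^?k * M m (cocycle B m n *v x)"
        using sv[OF mn, where P = "mat 1" and x = x] sp by (simp add: M_scale)
      also have "\<dots> \<le> (1/\<sigma>)^?k * (K0 * g^?k * M n x)" using grow[OF mn] p1 by (intro mult_left_mono) auto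
      also have "\<dots> = K0 * (g/\<sigma>)^?k * M n x" using sp by (simp add: power_divide field_simps)
      also have "\<dots> \<le> K' * exp a^?k * M n x"
        using KK ea1 Mn g sp K0 by (intro mult_right_mono mult_mono power_mono) auto
      finally show "M m (cocycle ?D m n *v x) \<le> K' * exp (a * (real m - real n)) * M n x"
        using eea by simp
      have "M n (cocycle ?D n m *v x) = \<sigma>^?k * M n (cocycle B n m *v x)"
        using sv2[OF mn, where P = "mat 1" and x = x] sp by (simp add: M_scale)
      also have "\<dots> \<le> \<sigma>^?k * (K0 * g^?k * M m x)" using grow[OF mn] p1 by (intro mult_left_mono) auto
      also have "\<dots> = K0 * (g*\<sigma>)^?k * M m x" by (simp add: power_mult_distrib mult_ac)
      also have "\<dots> \<le> K' * exp a^?k * M m x"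
        using KK ea2 Mn g sp K0 by (intro mult_right_mono mult_mono power_mono) auto
      finally show "M n (cocycle ?D n m *v x) \<le> K' * exp (a * (real m - real n)) * M m x"
        using eea by simp
    qed
  }
qed

lemma Sigma_ED_eq: "Sigma_ED B M = {s. s > 0 \<and> s \<notin> rho}"
  unfolding Sigma_ED_def rho_def using ED_char by auto

end

lemma spectrum_struct:
  fixes rho :: "real set" and ind :: "real \<Rightarrow> nat" and d :: nat
  assumes d: "d \<ge> 1"
    and H1: "\<And>\<sigma>. ind \<sigma> \<le> d"
    and H2: "\<And>s1 s2. s1 \<in> rho \<Longrightarrow> s2 \<in> rho \<Longrightarrow> s1 \<le> s2 \<Longrightarrow> ind s1 \<le> ind s2"
    and H3: "\<And>s1 s2 s. s1 \<in> rho \<Longrightarrow> s2 \<in> rho \<Longrightarrow> s1 \<le> s \<Longrightarrow> s \<le> s2 \<Longrightarrow> ind s1 = ind s2 \<Longrightarrow> s \<in> rho"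
    and H4: "\<And>s. s \<in> rho \<Longrightarrow> \<exists>lo hi. lo < s \<and> s < hi \<and> (\<forall>u. lo < u \<and> u < hi \<longrightarrow> u \<in> rho \<and> ind u = ind s)"
    and H5: "\<exists>e>0. \<forall>s. 0 < s \<and> s \<le> e \<longrightarrow> s \<in> rho \<and> ind s = 0"
    and H6: "\<exists>Mx. \<forall>s\<ge>Mx. s \<in> rho \<and> ind s = d"
    and pos: "\<And>s. s \<in> rho \<Longrightarrow> s > 0"
  shows "\<exists>r a b. 1 \<le> r \<and> r \<le> d \<and> (\<forall>i\<in>{1..r}. 0 < a i \<and> a i \<le> b i) \<and>
     (\<forall>i. 1 \<le> i \<and> i < r \<longrightarrow> b i < a (i+1)) \<and>
     {s. s > 0 \<and> s \<notin> rho} = (\<Union>i\<in>{1..r}. {a i..b i})"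
proof -
  obtain e where e: "e > 0" "\<And>s. 0 < s \<Longrightarrow> s \<le> e \<Longrightarrow> s \<in> rho \<and> ind s = 0" using H5 by blast
  obtain Mx where Mx: "\<And>s. s \<ge> Mx \<Longrightarrow> s \<in> rho \<and> ind s = d" using H6 by blast
  define R where "R k = {s \<in> rho. ind s = k}" for k
  define J where "J = {k. R k \<noteq> {}}"
  have J_sub: "J \<subseteq> {0..d}" using H1 by (auto simp: J_def R_def)
  have finJ: "finite J" using J_sub finite_subset by blast
  have e_in: "e \<in> R 0" using e by (auto simp: R_def)
  have Mx_in: "max Mx 1 \<in> R d" using Mx[of "max Mx 1"] by (auto simp: R_def)
  have J0: "0 \<in> J" using e_in by (auto simp: J_def)
  have Jd: "d \<in> J" using Mx_in by (auto simp: J_def)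
  define ks where "ks = sorted_list_of_set J"
  have ks_set: "set ks = J" using finJ by (simp add: ks_def)
  have ks_sorted: "sorted_wrt (<) ks" by (simp add: ks_def strict_sorted_list_of_set)
  have ks_len: "length ks = card J" using finJ by (simp add: ks_def)
  define r where "r = length ks - 1"
  have card2: "card J \<ge> 2"
  proof -
    have "{0, d} \<subseteq> J" using J0 Jd by auto
    then have "card {0,d} \<le> card J" using finJ card_mono by blast
    then show ?thesis using d by simp
  qed
  have rlen: "length ks = r + 1" using card2 ks_len r_def by simp
  have r1: "1 \<le> r" using card2 ks_len r_def by simp
  have "card J \<le> card {0..d}" using J_sub card_mono by blast
  then have rd: "r \<le> d" using ks_len r_def by simp
  have ks_less: "\<And>i j. i < j \<Longrightarrow> j \<le> r \<Longrightarrow> ks!i < ks!j"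
    using ks_sorted rlen sorted_wrt_nth_less by fastforce
  have ks_mono: "\<And>i j. i \<le> j \<Longrightarrow> j \<le> r \<Longrightarrow> ks!i \<le> ks!j"
    using ks_less by (metis le_eq_less_or_eq order.refl)
  have ks_J: "\<And>i. i \<le> r \<Longrightarrow> ks!i \<in> J" using ks_set rlen by (metis Suc_eq_plus1 le_imp_less_Suc nth_mem)
  have ks_ne: "\<And>i. i \<le> r \<Longrightarrow> R (ks!i) \<noteq> {}" using ks_J J_def by blast
  have J_ks: "\<And>k. k \<in> J \<Longrightarrow> \<exists>j\<le>r. k = ks!j"
    using ks_set rlen by (metis Suc_eq_plus1 in_set_conv_nth less_Suc_eq_le)
  have in_R: "\<And>s. s \<in> rho \<Longrightarrow> \<exists>j\<le>r. s \<in> R (ks!j)"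
  proof -
    fix s assume s: "s \<in> rho"
    then have "ind s \<in> J" by (auto simp: J_def R_def)
    then obtain j where "j \<le> r" "ind s = ks!j" using J_ks by blast
    then show "\<exists>j\<le>r. s \<in> R (ks!j)" using s by (auto simp: R_def)
  qed
  have R_order: "\<And>k k' s s'. s \<in> R k \<Longrightarrow> s' \<in> R k' \<Longrightarrow> k < k' \<Longrightarrow> s < s'"
  proof (rule ccontr)
    fix k k' s s' assume a: "s \<in> R k" "s' \<in> R k'" "k < k'" "\<not> s < s'"
    then have "ind s' \<le> ind s" using H2[of s' s] by (auto simp: R_def)
    then show False using a by (auto simp: R_def)
  qed
  have R_open: "\<And>k s. s \<in> R k \<Longrightarrow> (\<exists>s1\<in>R k. s1 < s) \<and> (\<exists>s2\<in>R k. s < s2)"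
  proof -
    fix k s assume s: "s \<in> R k"
    have sr: "s \<in> rho" using s by (simp add: R_def)
    obtain lo hi where lh: "lo < s" "s < hi" "\<forall>u. lo < u \<and> u < hi \<longrightarrow> u \<in> rho \<and> ind u = ind s"
      using H4[OF sr] by blast
    have u1: "lo < (lo+s)/2 \<and> (lo+s)/2 < hi" and u2: "lo < (s+hi)/2 \<and> (s+hi)/2 < hi" using lh(1,2) by auto
    have "(lo+s)/2 \<in> rho \<and> ind ((lo+s)/2) = ind s" using lh(3) u1 by blast
    then have m1: "(lo+s)/2 \<in> R k" using s by (simp add: R_def)
    have "(s+hi)/2 \<in> rho \<and> ind ((s+hi)/2) = ind s" using lh(3) u2 by blast
    then have m2: "(s+hi)/2 \<in> R k" using s by (simp add: R_def)
    have "(lo+s)/2 < s" "s < (s+hi)/2" using lh(1,2) by auto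
    then show "(\<exists>s1\<in>R k. s1 < s) \<and> (\<exists>s2\<in>R k. s < s2)" using m1 m2 by blast
  qed
  define a where "a i = Sup (R (ks!(i-1)))" for i
  define b where "b i = Inf (R (ks!i))" for i
  have below_a: "\<And>i j x. 1 \<le> i \<Longrightarrow> i \<le> r \<Longrightarrow> j < i \<Longrightarrow> x \<in> R (ks!j) \<Longrightarrow> x \<le> a i"
  proof -
    fix i j x assume a1: "1 \<le> i" "i \<le> r" "j < i" "x \<in> R (ks!j)"
    obtain y where y: "y \<in> R (ks!i)" using ks_ne a1 by blast
    have bdd: "bdd_above (R (ks!(i-1)))"
      using R_order[OF _ y] ks_less[of "i-1" i] a1 by (intro bdd_aboveI[of _ y]) (auto intro: less_imp_le)
    show "x \<le> a i"
    proof (cases "j = i - 1")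
      case True
      then show ?thesis using a1 bdd cSup_upper by (auto simp: a_def)
    next
      case False
      then have "j < i - 1" using a1 by simp
      then have "ks!j < ks!(i-1)" using ks_less a1 by simp
      have "i - 1 \<le> r" using a1 by simp
      then obtain z where z: "z \<in> R (ks!(i-1))" using ks_ne by blast
      have "x < z" using R_order[OF a1(4) z] \<open>ks!j < ks!(i-1)\<close> by simp
      also have "z \<le> a i" using z bdd cSup_upper by (auto simp: a_def)
      finally show ?thesis by simp
    qed
  qed
  have above_b: "\<And>i j x. i \<le> r \<Longrightarrow> i \<le> j \<Longrightarrow> j \<le> r \<Longrightarrow> x \<in> R (ks!j) \<Longrightarrow> b i \<le> x"
  proof -
    fix i j x assume a1: "i \<le> r" "i \<le> j" "j \<le> r" "x \<in> R (ks!j)"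
    have bdd: "bdd_below (R (ks!i))" using pos by (intro bdd_belowI[of _ 0]) (auto simp: R_def less_imp_le)
    show "b i \<le> x"
    proof (cases "j = i")
      case True
      then show ?thesis using a1 bdd cInf_lower by (auto simp: b_def)
    next
      case False
      then have "ks!i < ks!j" using ks_less a1 by simp
      obtain z where z: "z \<in> R (ks!i)" using ks_ne a1 by blast
      have "b i \<le> z" using z bdd cInf_lower by (auto simp: b_def)
      also have "z < x" using R_order[OF z a1(4)] \<open>ks!i < ks!j\<close> by simp
      finally show ?thesis by simp
    qed
  qed
  show ?thesis
  proof (intro exI conjI allI impI ballI)
    show "1 \<le> r" "r \<le> d" using r1 rd by auto
  next
    fix i assume i: "i \<in> {1..r}"
    have "i - 1 \<le> r" using i by auto
    then obtain x where x: "x \<in> R (ks!(i-1))" using ks_ne by blast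
    have "x > 0" using x pos by (auto simp: R_def)
    also have "x \<le> a i" using below_a[OF _ _ _ x] i by auto
    finally show "0 < a i" .
    show "a i \<le> b i"
    proof -
      have "a i \<le> y" if y: "y \<in> R (ks!i)" for y
        unfolding a_def
      proof (rule cSup_least)
        show "R (ks!(i-1)) \<noteq> {}" using x by blast
        fix z assume "z \<in> R (ks!(i-1))"
        then show "z \<le> y" using R_order[OF _ y] ks_less[of "i-1" i] i by (auto intro: less_imp_le)
      qed
      then show ?thesis unfolding b_def using ks_ne i by (intro cInf_greatest) (auto simp: b_def)
    qed
  next
    fix i assume i: "1 \<le> i \<and> i < r"
    have "i \<le> r" using i by simp
    then obtain x where x: "x \<in> R (ks!i)" using ks_ne by blast
    obtain s1 s2 where s: "s1 \<in> R (ks!i)" "s1 < x" "s2 \<in> R (ks!i)" "x < s2" using R_open[OF x] by blast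
    have "b i \<le> s1" using above_b[OF _ _ _ s(1)] i by auto
    also have "s1 < s2" using s by simp
    also have "s2 \<le> a (i+1)" using below_a[of "i+1" i s2] s i by auto
    finally show "b i < a (i+1)" .
  next
    show "{s. s > 0 \<and> s \<notin> rho} = (\<Union>i\<in>{1..r}. {a i..b i})"
    proof (intro equalityI subsetI)
      fix s assume "s \<in> {s. s > 0 \<and> s \<notin> rho}"
      then have s: "s > 0" "s \<notin> rho" by auto
      have side: "\<And>j. j \<le> r \<Longrightarrow> (\<forall>x\<in>R (ks!j). x < s) \<or> (\<forall>x\<in>R (ks!j). s < x)"
      proof (rule ccontr)
        fix j assume j: "j \<le> r" and "\<not> ((\<forall>x\<in>R (ks!j). x < s) \<or> (\<forall>x\<in>R (ks!j). s < x))"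
        then obtain x y where xy: "x \<in> R (ks!j)" "y \<in> R (ks!j)" "x \<ge> s" "y \<le> s" by (auto simp: not_less)
        have "s \<in> rho" using H3[of y x s] xy by (auto simp: R_def)
        then show False using s by simp
      qed
      define P where "P j \<longleftrightarrow> (\<forall>x\<in>R (ks!j). s < x)" for j
      have Pr: "P r"
      proof -
        have "max Mx (s+1) \<in> R (ks!r)"
        proof -
          have "ks!r = d"
          proof (rule antisym)
            have "ks!r \<in> J" using ks_J by simp
            then show "ks!r \<le> d" using J_sub by auto
            obtain j where "j \<le> r" "d = ks!j" using J_ks Jd by blast
            then show "d \<le> ks!r" using ks_mono by simp
          qed
          then show ?thesis using Mx[of "max Mx (s+1)"] by (auto simp: R_def)
        qed
        then have "\<not> (\<forall>x\<in>R (ks!r). x < s)" by force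
        then show ?thesis using side[of r] by (auto simp: P_def)
      qed
      have nP0: "\<not> P 0"
      proof -
        have "ks!0 = 0"
        proof -
          obtain j where "j \<le> r" "0 = ks!j" using J_ks J0 by blast
          then show ?thesis using ks_mono[of 0 j] by simp
        qed
        then have "min e (s/2) \<in> R (ks!0)" using e(2)[of "min e (s/2)"] e(1) s by (auto simp: R_def)
        moreover have "min e (s/2) < s" using s by simp
        ultimately show ?thesis by (force simp: P_def)
      qed
      define i where "i = (LEAST j. P j)"
      have Pi: "P i" using Pr LeastI i_def by metis
      have ir: "i \<le> r" using Pr Least_le i_def by metis
      have i1: "1 \<le> i" using Pi nP0 by (cases i) auto
      have nPi: "\<not> P (i-1)" using i1 not_less_Least[of "i-1" P] i_def by simp
      have "i - 1 \<le> r" using ir by simp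
      then have "(\<forall>x\<in>R (ks!(i-1)). x < s) \<or> (\<forall>x\<in>R (ks!(i-1)). s < x)" by (rule side)
      then have lt: "\<forall>x\<in>R (ks!(i-1)). x < s" using nPi unfolding P_def by blast
      have "a i \<le> s" unfolding a_def
        using lt ks_ne[of "i-1"] ir by (intro cSup_least) (auto intro: less_imp_le)
      moreover have "s \<le> b i" unfolding b_def
        using Pi ks_ne[of i] ir by (intro cInf_greatest) (auto simp: P_def intro: less_imp_le)
      ultimately show "s \<in> (\<Union>i\<in>{1..r}. {a i..b i})" using i1 ir by auto
    next
      fix s assume "s \<in> (\<Union>i\<in>{1..r}. {a i..b i})"
      then obtain i where i: "1 \<le> i" "i \<le> r" "a i \<le> s" "s \<le> b i" by auto
      have "i - 1 \<le> r" using i by auto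
      then obtain x where x: "x \<in> R (ks!(i-1))" using ks_ne by blast
      have "0 < x" using x pos by (auto simp: R_def)
      also have "x \<le> a i" using below_a[OF _ _ _ x] i by auto
      finally have s0: "s > 0" using i by simp
      have "s \<notin> rho"
      proof
        assume "s \<in> rho"
        then obtain j where j: "j \<le> r" "s \<in> R (ks!j)" using in_R by blast
        show False
        proof (cases "j < i")
          case True
          obtain s2 where "s2 \<in> R (ks!j)" "s < s2" using R_open[OF j(2)] by blast
          then show False using below_a[of i j s2] i True by auto
        next
          case False
          obtain s1 where "s1 \<in> R (ks!j)" "s1 < s" using R_open[OF j(2)] by blast
          then show False using above_b[of i j s1] i False j by auto
        qed
      qed
      then show "s \<in> {s. s > 0 \<and> s \<notin> rho}" using s0 by simp
    qed
  qed
qed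

lemma powr_ratio_pow:
  assumes "n \<le> m"
  shows "(real ((2::nat)^m) / real ((2::nat)^n)) powr a = (2 powr a)^(m-n)"
proof -
  have "real ((2::nat)^m) / real ((2::nat)^n) = 2^(m-n)"
    using assms by (simp add: power_diff)
  then show ?thesis by (simp add: powr_realpow[symmetric] powr_powr mult.commute)
qed

lemma two_powr_ge_iff:
  fixes c t :: real
  assumes "c > 0"
  shows "c \<le> 2 powr t \<longleftrightarrow> ln c / ln 2 \<le> t"
proof -
  have "c \<le> 2 powr t \<longleftrightarrow> ln c \<le> ln (2 powr t)" by (rule ln_le_cancel_iff[symmetric]) (use assms in auto)
  also have "\<dots> \<longleftrightarrow> ln c \<le> t * ln 2" by (simp add: ln_powr)
  also have "\<dots> \<longleftrightarrow> ln c / ln 2 \<le> t" by (simp add: pos_divide_le_eq)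
  finally show ?thesis .
qed

lemma two_powr_le_iff:
  fixes c t :: real
  assumes "c > 0"
  shows "2 powr t \<le> c \<longleftrightarrow> t \<le> ln c / ln 2"
proof -
  have "2 powr t \<le> c \<longleftrightarrow> ln (2 powr t) \<le> ln c" by (rule ln_le_cancel_iff[symmetric]) (use assms in auto)
  also have "\<dots> \<longleftrightarrow> t * ln 2 \<le> ln c" by (simp add: ln_powr)
  also have "\<dots> \<longleftrightarrow> t \<le> ln c / ln 2" by (simp add: pos_le_divide_eq)
  finally show ?thesis .
qed

theorem corollary2p2:
  fixes A :: "nat \<Rightarrow> real ^ 'n ^ 'n" and N :: "nat \<Rightarrow> real ^ 'n \<Rightarrow> real"
  assumes inv: "\<forall>n\<ge>1. invertible (A n)"
    and norms: "\<forall>n\<ge>1. is_norm (N n)"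
    and growth: "\<exists>K a. K > 0 \<and> a > 0 \<and>
      (\<forall>m n x. 1 \<le> n \<longrightarrow> n \<le> m \<longrightarrow>
         N m (cocycle A m n *v x) \<le> K * (real m / real n) powr a * N n x \<and>
         N n (cocycle A n m *v x) \<le> K * (real m / real n) powr a * N m x)"
  shows "\<exists>r (a::nat \<Rightarrow> real) b. 1 \<le> r \<and> r \<le> CARD('n) \<and>
      (\<forall>i\<in>{1..r}. a i \<le> b i) \<and> (\<forall>i. 1 \<le> i \<and> i < r \<longrightarrow> b i < a (i+1)) \<and>
      Sigma_ED (\<lambda>n. cocycle A (2^(n+1)) (2^n)) (\<lambda>n. N (2^n)) = (\<Union>i\<in>{1..r}. {a i..b i}) \<and>
      Sigma_PD A N = (\<Union>i\<in>{1..r}. {ln (a i) / ln 2..ln (b i) / ln 2})"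
proof -
  obtain K a where K: "K > 0" "a > 0" and gr: "\<And>m n x. 1 \<le> n \<Longrightarrow> n \<le> m \<Longrightarrow>
         N m (cocycle A m n *v x) \<le> K * (real m / real n) powr a * N n x \<and>
         N n (cocycle A n m *v x) \<le> K * (real m / real n) powr a * N m x"
    using growth by blast
  define B where "B = (\<lambda>n. cocycle A (2^(n+1)) (2^n))"
  define M where "M = (\<lambda>n. N (2^n))"
  define g where "g = (2::real) powr a"
  have g1: "g \<ge> 1" using K by (simp add: g_def ge_one_powr_ge_zero)
  have p1: "\<And>i. 1 \<le> (2::nat)^i" by simp
  have cB: "\<And>m n. cocycle B m n = cocycle A (2^m) (2^n)" using coc_pow2[OF inv] by (simp add: B_def)
  interpret E: edsys B M K g
  proof
    show "\<forall>k. invertible (B k)" using coc_invertible[OF inv] p1 by (simp add: B_def)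
    show "\<forall>n. is_norm (M n)" using norms p1 by (simp add: M_def)
    show "K > 0" by (rule K(1))
    show "g \<ge> 1" by (rule g1)
    fix m n :: nat and x assume mn: "n \<le> m"
    have h: "1 \<le> (2::nat)^n" "(2::nat)^n \<le> 2^m" using mn by (auto intro: power_increasing)
    have pw: "(real ((2::nat)^m) / real ((2::nat)^n)) powr a = g^(m-n)"
      unfolding g_def by (rule powr_ratio_pow[OF mn])
    show "M m (cocycle B m n *v x) \<le> K * g^(m-n) * M n x \<and> M n (cocycle B n m *v x) \<le> K * g^(m-n) * M m x"
      using gr[OF h, of x] pw unfolding cB M_def by simp
  qed
  have d1: "CARD('n) \<ge> 1" by (simp add: Suc_le_eq)
  obtain r a' b' where r: "1 \<le> r" "r \<le> CARD('n)" and ab: "\<forall>i\<in>{1..r}. 0 < a' i \<and> a' i \<le> b' i"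
    and ba: "\<forall>i. 1 \<le> i \<and> i < r \<longrightarrow> b' i < a' (i+1)"
    and sig: "{s. s > 0 \<and> s \<notin> E.rho} = (\<Union>i\<in>{1..r}. {a' i..b' i})"
  proof -
    have "\<exists>r a b. 1 \<le> r \<and> r \<le> CARD('n) \<and> (\<forall>i\<in>{1..r}. 0 < a i \<and> a i \<le> b i) \<and>
     (\<forall>i. 1 \<le> i \<and> i < r \<longrightarrow> b i < a (i+1)) \<and>
     {s. s > 0 \<and> s \<notin> E.rho} = (\<Union>i\<in>{1..r}. {a i..b i})"
    proof (rule spectrum_struct[where ind = E.ind])
      show "1 \<le> CARD('n)" by (rule d1)
      show "\<And>s. E.ind s \<le> CARD('n)" by (rule E.H1)
      show "\<And>s1 s2. s1 \<in> E.rho \<Longrightarrow> s2 \<in> E.rho \<Longrightarrow> s1 \<le> s2 \<Longrightarrow> E.ind s1 \<le> E.ind s2"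
        using E.H2 by blast
      show "\<And>s1 s2 s. s1 \<in> E.rho \<Longrightarrow> s2 \<in> E.rho \<Longrightarrow> s1 \<le> s \<Longrightarrow> s \<le> s2 \<Longrightarrow> E.ind s1 = E.ind s2 \<Longrightarrow> s \<in> E.rho"
        using E.H3 by blast
      show "\<And>s. s \<in> E.rho \<Longrightarrow> \<exists>lo hi. lo < s \<and> s < hi \<and> (\<forall>u. lo < u \<and> u < hi \<longrightarrow> u \<in> E.rho \<and> E.ind u = E.ind s)"
        by (rule E.H4)
      show "\<exists>e>0. \<forall>s. 0 < s \<and> s \<le> e \<longrightarrow> s \<in> E.rho \<and> E.ind s = 0"
        using E.H5 g1 by (intro exI[of _ "1/(2*g)"]) auto
      show "\<exists>Mx. \<forall>s\<ge>Mx. s \<in> E.rho \<and> E.ind s = CARD('n)"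
        using E.H6 by blast
      show "\<And>s. s \<in> E.rho \<Longrightarrow> s > 0" by (simp add: E.rho_def)
    qed
    then show ?thesis using that by blast
  qed
  have SED: "Sigma_ED B M = (\<Union>i\<in>{1..r}. {a' i..b' i})" using E.Sigma_ED_eq sig by simp
  have PD_iff: "t \<in> Sigma_PD A N \<longleftrightarrow> 2 powr t \<in> Sigma_ED B M" for t
  proof -
    define Et where "Et = (\<lambda>n. ((real n + 1) / real n) powr (-t) *\<^sub>R A n)"
    define q where "q = (\<lambda>k::nat. real k powr (-t))"
    have q0: "\<forall>k\<ge>1. q k \<noteq> 0" by (simp add: q_def)
    have EtD: "\<forall>k\<ge>1. Et k = (q (Suc k) / q k) *\<^sub>R A k"
      by (auto simp: Et_def q_def powr_divide add.commute)
    have cE: "\<And>m n. 1 \<le> m \<Longrightarrow> 1 \<le> n \<Longrightarrow> cocycle Et m n = (q m / q n) *\<^sub>R cocycle A m n"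
      using coc_scale[OF inv q0 EtD] by blast
    have iE: "\<forall>k\<ge>1. invertible (Et k)"
      using inv by (auto simp: Et_def intro!: scalar_invertible)
    have Nnn: "\<And>n x. 1 \<le> n \<Longrightarrow> N n x \<ge> 0" using norms is_norm_def by blast
    have Nsc: "\<And>n c x. 1 \<le> n \<Longrightarrow> N n (c *\<^sub>R x) = \<bar>c\<bar> * N n x" using norms is_norm_def by blast
    have grE: "N m (cocycle Et m n *v x) \<le> K * (real m / real n) powr (a + \<bar>t\<bar>) * N n x \<and>
               N n (cocycle Et n m *v x) \<le> K * (real m / real n) powr (a + \<bar>t\<bar>) * N m x"
      if n1: "1 \<le> n" and mn: "n \<le> m" for m n x
    proof -
      have m1: "1 \<le> m" using n1 mn by simp
      have rn: "real n > 0" "real m > 0" "real m / real n \<ge> 1" using n1 mn by auto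
      have q1: "q m / q n = (real m / real n) powr (-t)" using rn by (simp add: q_def powr_divide)
      have "q n / q m = (real n / real m) powr (-t)" using rn by (simp add: q_def powr_divide)
      also have "\<dots> = (real m / real n) powr t"
        using rn by (simp add: powr_minus_divide powr_divide)
      finally have q2: "q n / q m = (real m / real n) powr t" .
      have f1: "(real m / real n) powr (-t) * (real m / real n) powr a \<le> (real m / real n) powr (a + \<bar>t\<bar>)"
        using rn by (simp add: powr_add[symmetric] powr_mono)
      have f2: "(real m / real n) powr t * (real m / real n) powr a \<le> (real m / real n) powr (a + \<bar>t\<bar>)"
        using rn by (simp add: powr_add[symmetric] powr_mono)
      have "N m (cocycle Et m n *v x) = (real m / real n) powr (-t) * N m (cocycle A m n *v x)"
        using cE[OF m1 n1] q1 Nsc m1 by (simp add: scaleR_matrix_vector_assoc[symmetric])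
      also have "\<dots> \<le> (real m / real n) powr (-t) * (K * (real m / real n) powr a * N n x)"
        using gr[OF n1 mn, of x] by (intro mult_left_mono) auto
      also have "\<dots> = K * ((real m / real n) powr (-t) * (real m / real n) powr a) * N n x" by (simp add: mult_ac)
      also have "\<dots> \<le> K * (real m / real n) powr (a + \<bar>t\<bar>) * N n x"
        using f1 K Nnn[OF n1] by (intro mult_right_mono mult_left_mono) auto
      finally have A1: "N m (cocycle Et m n *v x) \<le> K * (real m / real n) powr (a + \<bar>t\<bar>) * N n x" .
      have "N n (cocycle Et n m *v x) = (real m / real n) powr t * N n (cocycle A n m *v x)"
        using cE[OF n1 m1] q2 Nsc n1 by (simp add: scaleR_matrix_vector_assoc[symmetric])
      also have "\<dots> \<le> (real m / real n) powr t * (K * (real m / real n) powr a * N m x)"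
        using gr[OF n1 mn, of x] by (intro mult_left_mono) auto
      also have "\<dots> = K * ((real m / real n) powr t * (real m / real n) powr a) * N m x" by (simp add: mult_ac)
      also have "\<dots> \<le> K * (real m / real n) powr (a + \<bar>t\<bar>) * N m x"
        using f2 K Nnn[OF m1] by (intro mult_right_mono mult_left_mono) auto
      finally show ?thesis using A1 by simp
    qed
    have GG: "strong_poly_dich Et N \<longleftrightarrow> strong_exp_dich (\<lambda>k. cocycle Et (2^(k+1)) (2^k)) (\<lambda>k. N (2^k))"
      by (rule G[OF iE norms K(1), of "a + \<bar>t\<bar>"]) (use K grE in auto)
    have seq: "(\<lambda>k. cocycle Et (2^(k+1)) (2^k)) = (\<lambda>k. (1 / 2 powr t) *\<^sub>R B k)"
    proof
      fix k :: nat
      have "q (2^(k+1)) / q (2^k) = (real ((2::nat)^(k+1)) / real ((2::nat)^k)) powr (-t)"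
        by (simp only: q_def powr_divide of_nat_0_le_iff)
      also have "real ((2::nat)^(k+1)) / real ((2::nat)^k) = 2" by simp
      also have "(2::real) powr (-t) = 1 / 2 powr t" by (simp add: powr_minus_divide)
      finally have qeq: "q (2^(k+1)) / q (2^k) = 1 / 2 powr t" .
      have c1: "cocycle Et (2^(k+1)) (2^k) = (q (2^(k+1)) / q (2^k)) *\<^sub>R cocycle A (2^(k+1)) (2^k)"
        by (rule cE; rule p1)
      show "cocycle Et (2^(k+1)) (2^k) = (1 / 2 powr t) *\<^sub>R B k"
        unfolding B_def by (simp only: c1 qeq)
    qed
    have "t \<in> Sigma_PD A N \<longleftrightarrow> \<not> strong_poly_dich Et N" by (simp add: Sigma_PD_def Et_def)
    also have "\<dots> \<longleftrightarrow> \<not> strong_exp_dich (\<lambda>k. (1 / 2 powr t) *\<^sub>R B k) M"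
      using GG seq by (simp add: M_def)
    also have "\<dots> \<longleftrightarrow> 2 powr t \<in> Sigma_ED B M" by (simp add: Sigma_ED_def)
    finally show ?thesis .
  qed
  have SPD: "Sigma_PD A N = (\<Union>i\<in>{1..r}. {ln (a' i) / ln 2..ln (b' i) / ln 2})"
  proof (intro set_eqI)
    fix t
    have "t \<in> Sigma_PD A N \<longleftrightarrow> (\<exists>i\<in>{1..r}. a' i \<le> 2 powr t \<and> 2 powr t \<le> b' i)"
      using PD_iff SED by auto
    also have "\<dots> \<longleftrightarrow> (\<exists>i\<in>{1..r}. ln (a' i) / ln 2 \<le> t \<and> t \<le> ln (b' i) / ln 2)"
    proof (intro bex_cong refl)
      fix i assume i: "i \<in> {1..r}"
      have pa: "a' i > 0" "b' i > 0" using ab i by force+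
      show "(a' i \<le> 2 powr t \<and> 2 powr t \<le> b' i) \<longleftrightarrow> (ln (a' i) / ln 2 \<le> t \<and> t \<le> ln (b' i) / ln 2)"
        using two_powr_ge_iff[OF pa(1)] two_powr_le_iff[OF pa(2)] by simp
    qed
    finally show "t \<in> Sigma_PD A N \<longleftrightarrow> t \<in> (\<Union>i\<in>{1..r}. {ln (a' i) / ln 2..ln (b' i) / ln 2})" by auto
  qed
  show ?thesis
  proof -
    have c3: "\<forall>i\<in>{1..r}. a' i \<le> b' i" using ab by blast
    have c5: "Sigma_ED (\<lambda>n. cocycle A (2^(n+1)) (2^n)) (\<lambda>n. N (2^n)) = (\<Union>i\<in>{1..r}. {a' i..b' i})"
      using SED unfolding B_def M_def .
    show ?thesis using r c3 ba c5 SPD by blast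
  qed
qed

end
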